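(* Let $G$ be a path graph with $L$ edges rooted at a vertex $O$ that is not an endpoint, and let all edges have activation probability $p\in(0,1]$. Then the value of the stochastic search game is $$\mathrm{val}(p)=\frac{L}{p}+\frac{1}{1-(1-p)^2}-\frac1p.$$ Moreover, the following are optimal strategies: - for the hider, the distribution putting mass $\lambda_i/L$ on the extreme edge of side $i$, where $\lambda_i$ is the number of edges on side $i$ of $O$; - for the searcher, the uniform depth-first strategy.
   Context: Setting: the stochastic search game on $G$. Every edge has length $1$ and is active at each stage independently with probability $p$. The hider chooses an edge and stays there. The searcher starts at $O$; at each stage, knowing which edges are currently active, she waits or traverses an active edge incident to her position. The hider's payoff is the expected first time the searcher traverses his edge. Uniform depth-first strategy, with edges oriented away from $O$: at the current vertex, - if some untraversed outgoing edge is active, take one chosen uniformly among the active untraversed outgoing edges; - if all untraversed outgoing edges are inactive, wait; - once all outgoing edges have been traversed, go back toward $O$ when that edge is active, and wait otherwise. *)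

theory Defs
  imports "HOL-Probability.Probability"
begin

text \<open>
The path has a edges on side 1 and b edges on side 2 (a, b \<ge> 1, L = a + b).
Vertices are the integers -b..a, the root O is the vertex 0.
The edge with label e joins the vertices e and e+1; the edge set is {-b ..< a}.
Every edge has length 1; at each stage each edge is active independently with
probability p.
\<close>

definition path_edges :: "nat \<Rightarrow> nat \<Rightarrow> int set" where
  "path_edges a b = {- int b ..< int a}"

definition parent_end :: "int \<Rightarrow> int" where
  "parent_end e = (if 0 \<le> e then e else e + 1)"

definition child_end :: "int \<Rightarrow> int" where
  "child_end e = (if 0 \<le> e then e + 1 else e)"

definition crosses :: "int \<Rightarrow> int \<Rightarrow> int \<Rightarrow> bool" where
  "crosses e u v \<longleftrightarrow> u \<noteq> v \<and> {u, v} = {e, e + 1}"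

text \<open>A history records, for each past stage, the set of active edges and the
searcher's position after that stage. The searcher starts at O = 0.\<close>
type_synonym history = "(int set \<times> int) list"

text \<open>A (behavioural, possibly randomised) searcher strategy: given the full past
and the currently active edges, a distribution over the next position.\<close>
type_synonym strategy = "history \<Rightarrow> int set \<Rightarrow> int pmf"

definition cur_pos :: "history \<Rightarrow> int" where
  "cur_pos h = last (0 # map snd h)"

definition legal_move :: "nat \<Rightarrow> nat \<Rightarrow> int set \<Rightarrow> int \<Rightarrow> int \<Rightarrow> bool" where
  "legal_move a b A u v \<longleftrightarrow> v = u \<or> (\<exists>e \<in> A \<inter> path_edges a b. crosses e u v)"

definition valid_strategy :: "nat \<Rightarrow> nat \<Rightarrow> strategy \<Rightarrow> bool" where
  "valid_strategy a b \<sigma> \<longleftrightarrow>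
     (\<forall>h A. \<forall>v \<in> set_pmf (\<sigma> h A). legal_move a b A (cur_pos h) v)"

definition traversed_in :: "int \<Rightarrow> history \<Rightarrow> bool" where
  "traversed_in e h \<longleftrightarrow>
     (\<exists>s < length h. crosses e ((0 # map snd h) ! s) (map snd h ! s))"

definition traversed_set :: "nat \<Rightarrow> nat \<Rightarrow> history \<Rightarrow> int set" where
  "traversed_set a b h = {e \<in> path_edges a b. traversed_in e h}"

definition activation :: "real \<Rightarrow> nat \<Rightarrow> nat \<Rightarrow> int set pmf" where
  "activation p a b =
     map_pmf (\<lambda>f. {e \<in> path_edges a b. f e})
       (Pi_pmf (path_edges a b) False (\<lambda>_. bernoulli_pmf p))"

fun run :: "real \<Rightarrow> nat \<Rightarrow> nat \<Rightarrow> strategy \<Rightarrow> nat \<Rightarrow> history pmf" where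
  "run p a b \<sigma> 0 = return_pmf []"
| "run p a b \<sigma> (Suc t) =
     bind_pmf (run p a b \<sigma> t) (\<lambda>h.
       bind_pmf (activation p a b) (\<lambda>A.
         map_pmf (\<lambda>v. h @ [(A, v)]) (\<sigma> h A)))"

text \<open>Expected first time T_e at which the searcher traverses edge e
(T_e \<in> {1,2,...,\<infinity>}), written as E[T_e] = \<Sum>_{t\<ge>0} P(T_e > t),
where T_e > t iff e has not been traversed in the first t stages.\<close>
definition search_time :: "real \<Rightarrow> nat \<Rightarrow> nat \<Rightarrow> strategy \<Rightarrow> int \<Rightarrow> ennreal" where
  "search_time p a b \<sigma> e =
     (\<Sum>t. ennreal (measure_pmf.prob (run p a b \<sigma> t) {h. \<not> traversed_in e h}))"

definition hider_strategies :: "nat \<Rightarrow> nat \<Rightarrow> int pmf set" where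
  "hider_strategies a b = {\<eta>. set_pmf \<eta> \<subseteq> path_edges a b}"

definition payoff :: "real \<Rightarrow> nat \<Rightarrow> nat \<Rightarrow> int pmf \<Rightarrow> strategy \<Rightarrow> ennreal" where
  "payoff p a b \<eta> \<sigma> = (\<Sum>e \<in> path_edges a b. ennreal (pmf \<eta> e) * search_time p a b \<sigma> e)"

definition lower_value :: "real \<Rightarrow> nat \<Rightarrow> nat \<Rightarrow> ennreal" where
  "lower_value p a b =
     (SUP \<eta> \<in> hider_strategies a b. INF \<sigma> \<in> Collect (valid_strategy a b). payoff p a b \<eta> \<sigma>)"

definition upper_value :: "real \<Rightarrow> nat \<Rightarrow> nat \<Rightarrow> ennreal" where
  "upper_value p a b =
     (INF \<sigma> \<in> Collect (valid_strategy a b). SUP \<eta> \<in> hider_strategies a b. payoff p a b \<eta> \<sigma>)"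

definition game_value :: "real \<Rightarrow> nat \<Rightarrow> nat \<Rightarrow> ennreal \<Rightarrow> bool" where
  "game_value p a b v \<longleftrightarrow> lower_value p a b = v \<and> upper_value p a b = v"

definition hider_optimal :: "real \<Rightarrow> nat \<Rightarrow> nat \<Rightarrow> ennreal \<Rightarrow> int pmf \<Rightarrow> bool" where
  "hider_optimal p a b v \<eta> \<longleftrightarrow> \<eta> \<in> hider_strategies a b \<and>
     (\<forall>\<sigma>. valid_strategy a b \<sigma> \<longrightarrow> v \<le> payoff p a b \<eta> \<sigma>)"

definition searcher_optimal :: "real \<Rightarrow> nat \<Rightarrow> nat \<Rightarrow> ennreal \<Rightarrow> strategy \<Rightarrow> bool" where
  "searcher_optimal p a b v \<sigma> \<longleftrightarrow> valid_strategy a b \<sigma> \<and>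
     (\<forall>\<eta> \<in> hider_strategies a b. payoff p a b \<eta> \<sigma> \<le> v)"

text \<open>Hider: mass a/L on the extreme edge of side 1 (edge a-1, joining a-1 and a)
and mass b/L on the extreme edge of side 2 (edge -b, joining -b and -b+1).\<close>
definition extreme_hider :: "nat \<Rightarrow> nat \<Rightarrow> int pmf" where
  "extreme_hider a b =
     map_pmf (\<lambda>x. if x then int a - 1 else - int b) (bernoulli_pmf (real a / real (a + b)))"

definition uniform_dfs :: "nat \<Rightarrow> nat \<Rightarrow> strategy" where
  "uniform_dfs a b h A =
     (let u = cur_pos h;
          E = path_edges a b;
          Out = {e \<in> E. parent_end e = u} - traversed_set a b h
      in if Out \<inter> A \<noteq> {} then map_pmf child_end (pmf_of_set (Out \<inter> A))
         else if Out \<noteq> {} then return_pmf u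
         else if (\<exists>e \<in> E \<inter> A. child_end e = u)
              then return_pmf (parent_end (THE e. e \<in> E \<and> child_end e = u))
         else return_pmf u)"

end

theory Submission
  imports Defs
begin



lemma finite_E[simp]: "finite (path_edges a b)"
  by (simp add: path_edges_def)

lemma mem_E: "e \<in> path_edges a b \<longleftrightarrow> - int b \<le> e \<and> e < int a"
  by (simp add: path_edges_def)

lemma cur_pos_snoc[simp]: "cur_pos (h @ [(A,v)]) = v"
  by (simp add: cur_pos_def)

lemma cur_pos_Nil[simp]: "cur_pos [] = 0"
  by (simp add: cur_pos_def)

lemma crosses_iff: "crosses e u v \<longleftrightarrow> (u = e \<and> v = e + 1) \<or> (u = e + 1 \<and> v = e)"
  unfolding crosses_def by (auto simp: doubleton_eq_iff)

lemma traversed_Nil[simp]: "\<not> traversed_in e []"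
  by (simp add: traversed_in_def)


lemma traversed_snoc:
  "traversed_in e (h @ [(A,v)]) \<longleftrightarrow> traversed_in e h \<or> crosses e (cur_pos h) v"
proof -
  let ?P = "0 # map snd h"
  have l: "cur_pos h = ?P ! length h"
    by (simp add: last_conv_nth cur_pos_def)
  have a: "(0 # map snd (h @ [(A,v)])) ! s = ?P ! s" if "s \<le> length h" for s
    using that by (cases s) (auto simp: nth_append)
  have b: "map snd (h @ [(A,v)]) ! s = (if s < length h then map snd h ! s else v)" if "s \<le> length h" for s
    using that by (simp add: nth_append)
  show ?thesis
    unfolding traversed_in_def
  proof
    assume "\<exists>s<length (h @ [(A, v)]). crosses e ((0 # map snd (h @ [(A, v)])) ! s) (map snd (h @ [(A, v)]) ! s)"
    then obtain s where s: "s \<le> length h" "crosses e ((0 # map snd (h @ [(A, v)])) ! s) (map snd (h @ [(A, v)]) ! s)"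
      by (metis less_Suc_eq_le length_append_singleton)
    show "(\<exists>s<length h. crosses e (?P ! s) (map snd h ! s)) \<or> crosses e (cur_pos h) v"
      using s a[OF s(1)] b[OF s(1)] l by (cases "s < length h") auto
  next
    assume "(\<exists>s<length h. crosses e (?P ! s) (map snd h ! s)) \<or> crosses e (cur_pos h) v"
    then show "\<exists>s<length (h @ [(A, v)]). crosses e ((0 # map snd (h @ [(A, v)])) ! s) (map snd (h @ [(A, v)]) ! s)"
    proof
      assume "\<exists>s<length h. crosses e (?P ! s) (map snd h ! s)"
      then obtain s where "s < length h" "crosses e (?P ! s) (map snd h ! s)" by auto
      then show ?thesis using a[of s] b[of s] by (intro exI[of _ s]) auto
    next
      assume "crosses e (cur_pos h) v"
      then show ?thesis using a[of "length h"] b[of "length h"] l by (intro exI[of _ "length h"]) auto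
    qed
  qed
qed


definition step_int :: "real \<Rightarrow> nat \<Rightarrow> nat \<Rightarrow> strategy \<Rightarrow> (history \<Rightarrow> ennreal) \<Rightarrow> history \<Rightarrow> ennreal" where
  "step_int p a b \<sigma> f h = (\<integral>\<^sup>+A. \<integral>\<^sup>+v. f (h @ [(A,v)]) \<partial>\<sigma> h A \<partial>activation p a b)"

lemma run_Suc_int: "(\<integral>\<^sup>+h. f h \<partial>run p a b \<sigma> (Suc t)) = (\<integral>\<^sup>+h. step_int p a b \<sigma> f h \<partial>run p a b \<sigma> t)"
  by (simp add: step_int_def)

lemma run_0_int: "(\<integral>\<^sup>+h. f h \<partial>run p a b \<sigma> 0) = f []"
  by simp

lemma run_reach:
  assumes "R []"
    and "\<And>h A v. R h \<Longrightarrow> A \<in> set_pmf (activation p a b) \<Longrightarrow> v \<in> set_pmf (\<sigma> h A) \<Longrightarrow> R (h@[(A,v)])"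
  shows "h \<in> set_pmf (run p a b \<sigma> t) \<Longrightarrow> R h"
proof (induction t arbitrary: h)
  case 0 then show ?case using assms by simp
next
  case (Suc t) then show ?case using assms(2) by auto
qed

lemma upper_potential:
  fixes U c :: "history \<Rightarrow> ennreal"
  assumes reach: "\<And>t h. h \<in> set_pmf (run p a b \<sigma> t) \<Longrightarrow> R h"
    and step: "\<And>h. R h \<Longrightarrow> c h + step_int p a b \<sigma> U h \<le> U h"
  shows "(\<Sum>t. \<integral>\<^sup>+h. c h \<partial>run p a b \<sigma> t) \<le> U []"
proof -
  have main: "(\<Sum>t<n. \<integral>\<^sup>+h. c h \<partial>run p a b \<sigma> t) + (\<integral>\<^sup>+h. U h \<partial>run p a b \<sigma> n) \<le> U []" for n
  proof (induction n)
    case 0 then show ?case by simp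
  next
    case (Suc n)
    have "(\<Sum>t<Suc n. \<integral>\<^sup>+h. c h \<partial>run p a b \<sigma> t) + (\<integral>\<^sup>+h. U h \<partial>run p a b \<sigma> (Suc n))
       = (\<Sum>t<n. \<integral>\<^sup>+h. c h \<partial>run p a b \<sigma> t) + (\<integral>\<^sup>+h. c h + step_int p a b \<sigma> U h \<partial>run p a b \<sigma> n)"
      by (subst run_Suc_int) (simp add: nn_integral_add add.assoc del: run.simps)
    also have "\<dots> \<le> (\<Sum>t<n. \<integral>\<^sup>+h. c h \<partial>run p a b \<sigma> t) + (\<integral>\<^sup>+h. U h \<partial>run p a b \<sigma> n)"
      by (intro add_left_mono nn_integral_mono_AE AE_pmfI step reach)
    also have "\<dots> \<le> U []" by (rule Suc)
    finally show ?case .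
  qed
  have "(\<Sum>t<n. \<integral>\<^sup>+h. c h \<partial>run p a b \<sigma> t) \<le> U []" for n
    using main[of n] by (rule order_trans[rotated]) simp
  then show ?thesis
    by (intro suminf_le_const summableI)
qed

lemma ennreal_tendsto_zero_summable:
  fixes s :: "nat \<Rightarrow> ennreal"
  assumes "(\<Sum>t. s t) \<noteq> \<top>"
  shows "s \<longlonglongrightarrow> 0"
proof -
  have fin: "s t < \<top>" for t
    using assms by (intro ennreal_suminf_lessD[of s]) (simp add: less_top)
  define r where "r t = enn2real (s t)" for t
  have sr: "s t = ennreal (r t)" for t using fin[of t] unfolding r_def by (rule ennreal_enn2real[symmetric])
  have rs: "(\<lambda>t. ennreal (r t)) = s" using sr by presburger
  have "summable r"
    apply (rule summable_suminf_not_top) 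
    subgoal unfolding r_def by (rule enn2real_nonneg)
    subgoal unfolding rs by (rule assms)
    done
  then have "r \<longlonglongrightarrow> 0" by (rule summable_LIMSEQ_zero)
  then have "(\<lambda>t. ennreal (r t)) \<longlonglongrightarrow> ennreal 0"
    by (rule tendsto_ennrealI)
  then show ?thesis unfolding rs ennreal_0 .
qed


lemma lower_potential:
  fixes U c :: "history \<Rightarrow> ennreal"
  assumes reach: "\<And>t h. h \<in> set_pmf (run p a b \<sigma> t) \<Longrightarrow> R h"
    and step: "\<And>h. R h \<Longrightarrow> U h \<le> c h + step_int p a b \<sigma> U h"
    and bound: "\<And>h. R h \<Longrightarrow> U h \<le> K * c h"
    and K: "K \<noteq> \<top>"
  shows "U [] \<le> (\<Sum>t. \<integral>\<^sup>+h. c h \<partial>run p a b \<sigma> t)"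
proof -
  define s where "s t = (\<integral>\<^sup>+h. c h \<partial>run p a b \<sigma> t)" for t
  have main: "U [] \<le> (\<Sum>t<n. s t) + (\<integral>\<^sup>+h. U h \<partial>run p a b \<sigma> n)" for n
  proof (induction n)
    case 0 then show ?case by simp
  next
    case (Suc n)
    have "(\<integral>\<^sup>+h. U h \<partial>run p a b \<sigma> n) \<le> (\<integral>\<^sup>+h. c h + step_int p a b \<sigma> U h \<partial>run p a b \<sigma> n)"
      by (intro nn_integral_mono_AE AE_pmfI step reach)
    also have "\<dots> = s n + (\<integral>\<^sup>+h. U h \<partial>run p a b \<sigma> (Suc n))"
      by (subst run_Suc_int) (simp add: nn_integral_add s_def del: run.simps)
    finally have "(\<integral>\<^sup>+h. U h \<partial>run p a b \<sigma> n) \<le> s n + (\<integral>\<^sup>+h. U h \<partial>run p a b \<sigma> (Suc n))" .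
    then have "(\<Sum>t<n. s t) + (\<integral>\<^sup>+h. U h \<partial>run p a b \<sigma> n) \<le> (\<Sum>t<n. s t) + (s n + (\<integral>\<^sup>+h. U h \<partial>run p a b \<sigma> (Suc n)))"
      by (rule add_left_mono)
    then have "U [] \<le> (\<Sum>t<n. s t) + (s n + (\<integral>\<^sup>+h. U h \<partial>run p a b \<sigma> (Suc n)))"
      using Suc.IH by (rule order_trans[rotated])
    then show ?case by (simp only: sum.lessThan_Suc add.assoc)
  qed
  have main2: "U [] \<le> (\<Sum>t<n. s t) + K * s n" for n
  proof -
    have "(\<integral>\<^sup>+h. U h \<partial>run p a b \<sigma> n) \<le> (\<integral>\<^sup>+h. K * c h \<partial>run p a b \<sigma> n)"
      by (intro nn_integral_mono_AE AE_pmfI bound reach)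
    also have "\<dots> = K * s n" by (simp add: nn_integral_cmult s_def)
    finally have "(\<Sum>t<n. s t) + (\<integral>\<^sup>+h. U h \<partial>run p a b \<sigma> n) \<le> (\<Sum>t<n. s t) + K * s n"
      by (rule add_left_mono)
    with main[of n] show ?thesis by (rule order_trans)
  qed
  show ?thesis
  proof (cases "(\<Sum>t. s t) = \<top>")
    case True then show ?thesis by (simp add: s_def)
  next
    case False
    have "s \<longlonglongrightarrow> 0" by (rule ennreal_tendsto_zero_summable[OF False])
    then have "(\<lambda>n. K * s n) \<longlonglongrightarrow> K * 0"
      using K by (intro ennreal_tendsto_cmult) (auto simp: top.not_eq_extremum)
    moreover have "(\<lambda>n. \<Sum>t<n. s t) \<longlonglongrightarrow> (\<Sum>t. s t)"
      by (intro summable_LIMSEQ summableI)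
    ultimately have "(\<lambda>n. (\<Sum>t<n. s t) + K * s n) \<longlonglongrightarrow> (\<Sum>t. s t) + K * 0"
      by (intro tendsto_add)
    then have "U [] \<le> (\<Sum>t. s t) + K * 0"
      by (rule LIMSEQ_le_const) (use main2 in \<open>intro exI[of _ 0] allI impI\<close>)
    then show ?thesis by (simp add: s_def)
  qed
qed




lemma act_map1:
  assumes "e \<in> path_edges a b"
  shows "map_pmf (\<lambda>A. e \<in> A) (activation p a b) = bernoulli_pmf p"
proof -
  have "map_pmf (\<lambda>A. e \<in> A) (activation p a b) =
        map_pmf (\<lambda>f. f e) (Pi_pmf (path_edges a b) False (\<lambda>_. bernoulli_pmf p))"
    unfolding activation_def pmf.map_comp o_def using assms by simp
  also have "\<dots> = bernoulli_pmf p"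
    using assms by (simp add: Pi_pmf_component)
  finally show ?thesis .
qed

lemma act_map2:
  assumes "e1 \<in> path_edges a b" "e2 \<in> path_edges a b" "e1 \<noteq> e2"
  shows "map_pmf (\<lambda>A. (e1 \<in> A, e2 \<in> A)) (activation p a b) = pair_pmf (bernoulli_pmf p) (bernoulli_pmf p)"
proof -
  let ?q = "\<lambda>_::int. bernoulli_pmf p"
  have "map_pmf (\<lambda>A. (e1 \<in> A, e2 \<in> A)) (activation p a b) =
        map_pmf (\<lambda>f. (f e1, f e2)) (Pi_pmf (path_edges a b) False ?q)"
    unfolding activation_def pmf.map_comp o_def using assms by simp
  also have "\<dots> = map_pmf (\<lambda>f. (f e1, f e2)) (Pi_pmf {e1, e2} False ?q)"
    using assms by (subst Pi_pmf_subset[of "path_edges a b" "{e1,e2}"]) (auto simp: pmf.map_comp o_def)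
  also have "\<dots> = map_pmf (\<lambda>f. (f e1, f e2)) (map_pmf (\<lambda>(y,f). f(e1:=y)) (pair_pmf (?q e1) (Pi_pmf {e2} False ?q)))"
    using assms by (subst Pi_pmf_insert) auto
  also have "\<dots> = map_pmf (\<lambda>x. x) (pair_pmf (bernoulli_pmf p) (bernoulli_pmf p))"
    using assms by (simp add: Pi_pmf_singleton pair_map_pmf2 pmf.map_comp o_def case_prod_unfold)
  also have "\<dots> = pair_pmf (bernoulli_pmf p) (bernoulli_pmf p)"
    by simp
  finally show ?thesis .
qed

lemma nn_act1:
  assumes "e \<in> path_edges a b" "0 \<le> p" "p \<le> 1"
  shows "(\<integral>\<^sup>+A. g (e \<in> A) \<partial>activation p a b) = g True * ennreal p + g False * ennreal (1 - p)"
proof -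
  have "(\<integral>\<^sup>+A. g (e \<in> A) \<partial>activation p a b) = (\<integral>\<^sup>+x. g x \<partial>map_pmf (\<lambda>A. e \<in> A) (activation p a b))"
    by simp
  also have "\<dots> = g True * ennreal p + g False * ennreal (1 - p)"
    using assms by (simp add: act_map1)
  finally show ?thesis .
qed

lemma nn_act2:
  assumes "e1 \<in> path_edges a b" "e2 \<in> path_edges a b" "e1 \<noteq> e2" "0 \<le> p" "p \<le> 1"
  shows "(\<integral>\<^sup>+A. g (e1 \<in> A) (e2 \<in> A) \<partial>activation p a b) =
     (g True True * ennreal p + g True False * ennreal (1 - p)) * ennreal p
   + (g False True * ennreal p + g False False * ennreal (1 - p)) * ennreal (1 - p)"
proof -
  have "(\<integral>\<^sup>+A. g (e1 \<in> A) (e2 \<in> A) \<partial>activation p a b) =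
        (\<integral>\<^sup>+x. case_prod g x \<partial>map_pmf (\<lambda>A. (e1 \<in> A, e2 \<in> A)) (activation p a b))"
    by simp
  also have "\<dots> = (\<integral>\<^sup>+x. case_prod g x \<partial>pair_pmf (bernoulli_pmf p) (bernoulli_pmf p))"
    by (subst act_map2[OF assms(1-3)]) (rule refl)
  also have "\<dots> = (g True True * ennreal p + g True False * ennreal (1 - p)) * ennreal p
   + (g False True * ennreal p + g False False * ennreal (1 - p)) * ennreal (1 - p)"
    using assms by (simp add: nn_integral_pair_pmf')
  finally show ?thesis .
qed



definition Wh :: "nat \<Rightarrow> nat \<Rightarrow> real \<Rightarrow> int \<Rightarrow> bool \<Rightarrow> bool \<Rightarrow> real" where
  "Wh a b q x f1 f2 = (if f1 \<and> f2 then 0 else if f1 then real b * (x + b) else if f2 then real a * (a - x)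
     else if x = 0 then (real a + b) * (real a + b - 1) + q else (real a + b) * (real a + b - \<bar>x\<bar>))"

definition Dh :: "nat \<Rightarrow> nat \<Rightarrow> real \<Rightarrow> int \<Rightarrow> bool \<Rightarrow> bool \<Rightarrow> real" where
  "Dh a b q x f1 f2 = (if f1 \<and> f2 then 0 else if f1 then real b else if f2 then real a
     else if x = 0 then q else real a + b)"

definition gedge :: "int \<Rightarrow> bool \<Rightarrow> bool \<Rightarrow> int" where
  "gedge x f1 f2 = (if f1 then x - 1 else if f2 then x else if x > 0 then x else x - 1)"

lemma W_move:
  fixes x v :: int and a b :: nat
  assumes ab: "1 \<le> a" "1 \<le> b" and q: "0 \<le> q"
    and rng: "- int b \<le> x" "x \<le> int a" "x = int a \<longrightarrow> f1" "x = - int b \<longrightarrow> f2"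
    and mv: "v = x \<or> (v = x + 1 \<and> x < int a \<and> K1) \<or> (v = x - 1 \<and> - int b < x \<and> K2)"
    and f1': "f1' = (f1 \<or> (x = int a - 1 \<and> v = int a) \<or> (x = int a \<and> v = int a - 1))"
    and f2': "f2' = (f2 \<or> (x = - int b \<and> v = - int b + 1) \<or> (x = - int b + 1 \<and> v = - int b))"
  shows "Wh a b q x f1 f2 - Dh a b q x f1 f2 *
           (if (if \<not> f1 \<and> \<not> f2 \<and> x = 0 then K1 \<or> K2 else if gedge x f1 f2 = x then K1 else K2) then 1 else 0)
         \<le> Wh a b q v f1' f2'"
proof -
  have L: "real a \<ge> 1" "real b \<ge> 1" using ab by auto
  consider (st) "v = x" | (up) "v = x + 1" "x < int a" "K1" | (dn) "v = x - 1" "- int b < x" "K2"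
    using mv by blast
  then show ?thesis
  proof cases
    case st
    then show ?thesis using f1' f2' q L
      by (cases f1; cases f2) (auto simp: Wh_def Dh_def mult_nonneg_nonneg)
  next
    case up
    show ?thesis
    proof (cases f1)
      case True
      then show ?thesis using up f1' f2' q L rng
        by (cases f2) (auto simp: Wh_def Dh_def gedge_def algebra_simps)
    next
      case False
      have e1: "x = int a - 1 \<Longrightarrow> real_of_int x = real a - 1" by simp
      have e2: "x = - 1 \<Longrightarrow> real_of_int x = - 1" by simp
      show ?thesis using up f1' f2' q L rng False
        by (cases f2; cases "x = 0"; cases "x < 0"; cases "x = int a - 1"; cases "x = -1")
          (auto simp: Wh_def Dh_def gedge_def algebra_simps e1 e2)
    qed
  next
    case dn
    show ?thesis
    proof (cases f2)
      case True
      then show ?thesis using dn f1' f2' q L rng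
        by (cases f1) (auto simp: Wh_def Dh_def gedge_def algebra_simps)
    next
      case False
      have e1: "x = - int b + 1 \<Longrightarrow> real_of_int x = 1 - real b" by simp
      have e2: "x = 1 \<Longrightarrow> real_of_int x = 1" by simp
      have e3: "v = - int b \<Longrightarrow> real_of_int v = - real b" by simp
      show ?thesis using dn f1' f2' q L rng False
        by (cases f1; cases "x = 0"; cases "x > 0"; cases "x = - int b + 1"; cases "x = 1")
          (auto simp: Wh_def Dh_def gedge_def algebra_simps e1 e2 e3)
    qed
  qed
qed





lemma enn_lin:
  fixes X Y P :: real
  assumes "0 \<le> X" "0 \<le> Y" "0 \<le> P" "P \<le> 1"
  shows "ennreal X * ennreal P + ennreal Y * ennreal (1-P) = ennreal (X*P + Y*(1-P))"
proof -
  have "ennreal (X*P + Y*(1-P)) = ennreal (X*P) + ennreal (Y*(1-P))"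
    using assms by (intro ennreal_plus) auto
  also have "\<dots> = ennreal X * ennreal P + ennreal Y * ennreal (1-P)"
    using assms by (simp add: ennreal_mult)
  finally show ?thesis by simp
qed

lemma legal_cases:
  assumes "legal_move a b A x v"
  shows "v = x \<or> (v = x+1 \<and> x \<in> A \<and> x \<in> path_edges a b) \<or> (v = x-1 \<and> x-1 \<in> A \<and> x-1 \<in> path_edges a b)"
  using assms unfolding legal_move_def crosses_iff by auto

definition Rlow :: "nat \<Rightarrow> nat \<Rightarrow> history \<Rightarrow> bool" where
  "Rlow a b h \<longleftrightarrow> - int b \<le> cur_pos h \<and> cur_pos h \<le> int a \<and>
     (cur_pos h = int a \<longrightarrow> traversed_in (int a - 1) h) \<and> (cur_pos h = - int b \<longrightarrow> traversed_in (- int b) h)"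

lemma Rlow_Nil: "1 \<le> a \<Longrightarrow> 1 \<le> b \<Longrightarrow> Rlow a b []"
  by (simp add: Rlow_def)

lemma Rlow_step:
  assumes "valid_strategy a b \<sigma>" "Rlow a b h" "v \<in> set_pmf (\<sigma> h A)"
  shows "Rlow a b (h @ [(A,v)])"
proof -
  have "legal_move a b A (cur_pos h) v" using assms(1,3) by (auto simp: valid_strategy_def)
  from legal_cases[OF this] consider "v = cur_pos h" | "v = cur_pos h + 1" "cur_pos h \<in> path_edges a b"
    | "v = cur_pos h - 1" "cur_pos h - 1 \<in> path_edges a b" by blast
  then show ?thesis
  proof cases
    case 1 then show ?thesis using assms(2) unfolding Rlow_def by (simp add: traversed_snoc)
  next
    case 2 then show ?thesis using assms(2) unfolding Rlow_def mem_E by (simp add: traversed_snoc crosses_iff)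
  next
    case 3 then show ?thesis using assms(2) unfolding Rlow_def mem_E by (simp add: traversed_snoc crosses_iff)
  qed
qed

lemma step_lb:
  assumes "\<And>A v. v \<in> set_pmf (\<sigma> h A) \<Longrightarrow> ennreal (l A) \<le> U (h @ [(A,v)])"
  shows "(\<integral>\<^sup>+A. ennreal (l A) \<partial>activation p a b) \<le> step_int p a b \<sigma> U h"
  unfolding step_int_def
proof (intro nn_integral_mono)
  fix A
  have "ennreal (l A) = (\<integral>\<^sup>+v. ennreal (l A) \<partial>\<sigma> h A)"
    by (simp add: measure_pmf.emeasure_space_1)
  also have "\<dots> \<le> (\<integral>\<^sup>+v. U (h @ [(A,v)]) \<partial>\<sigma> h A)"
    by (intro nn_integral_mono_AE AE_pmfI assms)
  finally show "ennreal (l A) \<le> (\<integral>\<^sup>+v. U (h @ [(A,v)]) \<partial>\<sigma> h A)" .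
qed

lemma WD_facts:
  fixes x :: int and a b :: nat
  assumes ab: "1 \<le> a" "1 \<le> b" and q: "0 \<le> q"
    and rng: "- int b \<le> x" "x \<le> int a" "x = int a \<longrightarrow> f1" "x = - int b \<longrightarrow> f2"
  shows "0 \<le> Dh a b q x f1 f2" "Dh a b q x f1 f2 \<le> Wh a b q x f1 f2"
    "Wh a b q x f1 f2 \<le> (real a + real b) * (real a + real b) + q"
proof -
  have L: "real a \<ge> 1" "real b \<ge> 1" using ab by auto
  have xr: "- real b \<le> real_of_int x" "real_of_int x \<le> real a" using rng by linarith+
  show "0 \<le> Dh a b q x f1 f2" using q by (simp add: Dh_def)
  show "Dh a b q x f1 f2 \<le> Wh a b q x f1 f2"
  proof (cases f1; cases f2)
    assume "f1" "\<not> f2"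
    then have "x \<noteq> - int b" using rng by auto
    then have "real_of_int x \<ge> 1 - real b" using rng by linarith
    then have "real b * 1 \<le> real b * (real_of_int x + real b)" using L by (intro mult_left_mono) auto
    then show ?thesis using \<open>f1\<close> \<open>\<not> f2\<close> by (simp add: Dh_def Wh_def)
  next
    assume "\<not> f1" "f2"
    then have "x \<noteq> int a" using rng by auto
    then have "real_of_int x \<le> real a - 1" using rng by linarith
    then have "real a * 1 \<le> real a * (real a - real_of_int x)" using L by (intro mult_left_mono) auto
    then show ?thesis using \<open>\<not> f1\<close> \<open>f2\<close> by (simp add: Dh_def Wh_def)
  next
    assume "\<not> f1" "\<not> f2"
    then have "x \<noteq> int a" "x \<noteq> - int b" using rng by auto
    then have "\<bar>real_of_int x\<bar> \<le> real a + real b - 1" using rng L by (auto simp: abs_if)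
    then have "(real a + real b) * 1 \<le> (real a + real b) * (real a + real b - \<bar>real_of_int x\<bar>)" using L by (intro mult_left_mono) auto
    moreover have "0 \<le> (real a + real b) * (real a + real b - 1)" using L by simp
    ultimately show ?thesis using \<open>\<not> f1\<close> \<open>\<not> f2\<close> q by (simp add: Dh_def Wh_def)
  qed (simp add: Dh_def Wh_def)
  show "Wh a b q x f1 f2 \<le> (real a + real b) * (real a + real b) + q"
  proof (cases f1; cases f2)
    assume "f1" "\<not> f2"
    have "real b * (real_of_int x + real b) \<le> (real a + real b) * (real a + real b)"
      using L xr by (intro mult_mono) auto
    then show ?thesis using \<open>f1\<close> \<open>\<not> f2\<close> q by (simp add: Wh_def)
  next
    assume "\<not> f1" "f2"
    have "real a * (real a - real_of_int x) \<le> (real a + real b) * (real a + real b)"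
      using L xr by (intro mult_mono) auto
    then show ?thesis using \<open>\<not> f1\<close> \<open>f2\<close> q by (simp add: Wh_def)
  next
    assume "\<not> f1" "\<not> f2"
    have "(real a + real b) * (real a + real b - \<bar>real_of_int x\<bar>) \<le> (real a + real b) * (real a + real b)"
      using L by (intro mult_left_mono) auto
    moreover have "(real a + real b) * (real a + real b - 1) \<le> (real a + real b) * (real a + real b)"
      using L by (intro mult_left_mono) auto
    ultimately show ?thesis using \<open>\<not> f1\<close> \<open>\<not> f2\<close> q by (simp add: Wh_def)
  qed (use q L in \<open>simp add: Wh_def\<close>)
qed

definition qq :: "real \<Rightarrow> nat \<Rightarrow> nat \<Rightarrow> real" where
  "qq p a b = (real a + real b) * p / (1 - (1 - p)^2)"

definition Ulow :: "real \<Rightarrow> nat \<Rightarrow> nat \<Rightarrow> history \<Rightarrow> ennreal" where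
  "Ulow p a b h = ennreal (Wh a b (qq p a b) (cur_pos h) (traversed_in (int a - 1) h) (traversed_in (- int b) h)
      / (p * (real a + real b)))"

definition clow :: "nat \<Rightarrow> nat \<Rightarrow> history \<Rightarrow> ennreal" where
  "clow a b h = ennreal ((if traversed_in (int a - 1) h then 0 else real a / (real a + real b))
      + (if traversed_in (- int b) h then 0 else real b / (real a + real b)))"

lemma r_pos: "0 < (p::real) \<Longrightarrow> p \<le> 1 \<Longrightarrow> 0 < 1 - (1 - p)^2"
proof -
  assume "0 < p" "p \<le> 1"
  then have "(1-p)*(1-p) \<le> 1*(1-p)" using mult_right_mono[of "1-p" 1 "1-p"] by auto
  then have "(1-p)^2 < 1" using \<open>0 < p\<close> by (simp add: power2_eq_square)
  then show ?thesis by simp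
qed

lemma lower_step:
  assumes p: "0 < p" "p \<le> 1" and ab: "1 \<le> a" "1 \<le> b" and \<sigma>: "valid_strategy a b \<sigma>" and R: "Rlow a b h"
  shows "Ulow p a b h \<le> clow a b h + step_int p a b \<sigma> (Ulow p a b) h"
proof -
  define x where "x = cur_pos h"
  define f1 where "f1 = traversed_in (int a - 1) h"
  define f2 where "f2 = traversed_in (- int b) h"
  define q where "q = qq p a b"
  define L where "L = real a + real b"
  define rr where "rr = 1 - (1 - p)^2"
  have rr: "0 < rr" unfolding rr_def using p by (rule r_pos)
  have L1: "L \<ge> 2" "real a \<ge> 1" "real b \<ge> 1" using ab by (auto simp: L_def)
  have q0: "0 \<le> q" unfolding q_def qq_def using rr p L1 by (simp add: rr_def L_def)
  have qr: "q * rr = L * p" unfolding q_def qq_def rr_def L_def using rr by (simp add: rr_def)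
  have rng: "- int b \<le> x" "x \<le> int a" "x = int a \<longrightarrow> f1" "x = - int b \<longrightarrow> f2"
    using R by (auto simp: Rlow_def x_def f1_def f2_def)
  note WD = WD_facts[OF ab q0 rng]
  have pL: "0 < p * L" using p L1 by simp
  have U_h: "Ulow p a b h = ennreal (Wh a b q x f1 f2 / (p * L))"
    by (simp add: Ulow_def x_def f1_def f2_def q_def L_def)
  show ?thesis
  proof (cases "f1 \<and> f2")
    case True
    then show ?thesis by (simp add: U_h Wh_def)
  next
    case False
    define K where "K A = (if \<not> f1 \<and> \<not> f2 \<and> x = 0 then (x \<in> A \<or> x - 1 \<in> A)
       else if gedge x f1 f2 = x then x \<in> A else x - 1 \<in> A)" for A
    define W where "W = Wh a b q x f1 f2"
    define D where "D = Dh a b q x f1 f2"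
    define l where "l A = (W - D * (if K A then 1 else 0)) / (p * L)" for A
    have pw: "ennreal (l A) \<le> Ulow p a b (h @ [(A,v)])" if v: "v \<in> set_pmf (\<sigma> h A)" for A v
    proof -
      have "legal_move a b A x v" using \<sigma> v by (auto simp: valid_strategy_def x_def)
      from legal_cases[OF this]
      have mv: "v = x \<or> (v = x + 1 \<and> x < int a \<and> x \<in> A) \<or> (v = x - 1 \<and> - int b < x \<and> x - 1 \<in> A)"
        by (auto simp: mem_E)
      have f1': "traversed_in (int a - 1) (h @ [(A,v)]) =
          (f1 \<or> (x = int a - 1 \<and> v = int a) \<or> (x = int a \<and> v = int a - 1))"
        by (simp add: traversed_snoc crosses_iff f1_def x_def) 
      have f2': "traversed_in (- int b) (h @ [(A,v)]) =
          (f2 \<or> (x = - int b \<and> v = - int b + 1) \<or> (x = - int b + 1 \<and> v = - int b))"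
        by (simp add: traversed_snoc crosses_iff f2_def x_def) 
      have "W - D * (if K A then 1 else 0) \<le> Wh a b q v (traversed_in (int a - 1) (h @ [(A,v)])) (traversed_in (- int b) (h @ [(A,v)]))"
        unfolding W_def D_def K_def by (rule W_move[OF ab q0 rng mv f1' f2'])
      then have "l A \<le> Wh a b q v (traversed_in (int a - 1) (h @ [(A,v)])) (traversed_in (- int b) (h @ [(A,v)])) / (p * L)"
        unfolding l_def using pL by (intro divide_right_mono) auto
      then show ?thesis
        by (simp add: Ulow_def q_def L_def ennreal_leI)
    qed
    have int_le: "(\<integral>\<^sup>+A. ennreal (l A) \<partial>activation p a b) \<le> step_int p a b \<sigma> (Ulow p a b) h"
      by (rule step_lb) (rule pw)
    define X where "X = (W - D) / (p * L)"
    define Y where "Y = W / (p * L)"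
    have X0: "0 \<le> X" unfolding X_def W_def D_def using WD pL by simp
    have Y0: "0 \<le> Y" unfolding Y_def W_def using WD pL by simp
    have main: "Ulow p a b h \<le> clow a b h + (\<integral>\<^sup>+A. ennreal (l A) \<partial>activation p a b)"
    proof (cases "\<not> f1 \<and> \<not> f2 \<and> x = 0")
      case True
      define g where "g u w = ennreal (if u \<or> w then X else Y)" for u w
      have E0: "0 \<in> path_edges a b" "-1 \<in> path_edges a b" using ab by (auto simp: mem_E)
      have "(\<integral>\<^sup>+A. ennreal (l A) \<partial>activation p a b) = (\<integral>\<^sup>+A. g (0 \<in> A) (-1 \<in> A) \<partial>activation p a b)"
        using True by (intro nn_integral_cong) (simp add: l_def g_def K_def X_def Y_def diff_divide_distrib)
      also have "\<dots> = (ennreal X * ennreal p + ennreal X * ennreal (1 - p)) * ennreal p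
          + (ennreal X * ennreal p + ennreal Y * ennreal (1 - p)) * ennreal (1 - p)"
        using p by (subst nn_act2[OF E0]) (auto simp: g_def)
      also have "\<dots> = ennreal ((X * p + X * (1 - p)) * p + (X * p + Y * (1 - p)) * (1 - p))"
      proof -
        have i1: "ennreal X * ennreal p + ennreal X * ennreal (1 - p) = ennreal (X*p + X*(1-p))"
          by (rule enn_lin) (use p X0 in auto)
        have i2: "ennreal X * ennreal p + ennreal Y * ennreal (1 - p) = ennreal (X*p + Y*(1-p))"
          by (rule enn_lin) (use p X0 Y0 in auto)
        have i3: "ennreal (X*p + X*(1-p)) * ennreal p + ennreal (X*p + Y*(1-p)) * ennreal (1 - p)
            = ennreal ((X * p + X * (1 - p)) * p + (X * p + Y * (1 - p)) * (1 - p))"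
          by (rule enn_lin) (use p X0 Y0 in auto)
        show ?thesis unfolding i1 i2 i3 ..
      qed
      finally have I: "(\<integral>\<^sup>+A. ennreal (l A) \<partial>activation p a b) = ennreal ((X * p + X * (1 - p)) * p + (X * p + Y * (1 - p)) * (1 - p))" .
      have c1: "clow a b h = ennreal 1"
        using True L1 by (simp add: clow_def f1_def f2_def add_divide_distrib[symmetric])
      have D: "D = q" using True by (simp add: D_def Dh_def)
      have "Y = 1 + ((X * p + X * (1 - p)) * p + (X * p + Y * (1 - p)) * (1 - p))"
      proof -
        have Z: "(X * p + X * (1 - p)) * p + (X * p + Y * (1 - p)) * (1 - p) = X * rr + Y * (1 - rr)"
          by (simp add: rr_def power2_eq_square algebra_simps)
        have YX: "Y - X = q / (p * L)" by (simp add: X_def Y_def D diff_divide_distrib)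
        have qpl: "q / (p * L) * rr = 1" using qr pL p L1 by (simp add: field_simps)
        have "(Y - X) * rr = 1" unfolding YX by (rule qpl)
        then show ?thesis unfolding Z by (simp add: algebra_simps)
      qed
      then have "ennreal Y = ennreal (1 + ((X * p + X * (1 - p)) * p + (X * p + Y * (1 - p)) * (1 - p)))"
        by (rule arg_cong)
      also have "\<dots> = ennreal 1 + ennreal ((X * p + X * (1 - p)) * p + (X * p + Y * (1 - p)) * (1 - p))"
        using X0 Y0 p by (intro ennreal_plus) (auto intro!: add_nonneg_nonneg mult_nonneg_nonneg)
      finally have "ennreal Y = ennreal 1 + ennreal ((X * p + X * (1 - p)) * p + (X * p + Y * (1 - p)) * (1 - p))" .
      then show ?thesis using U_h I c1 by (simp add: Y_def W_def)
    next
      case False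
      define e where "e = gedge x f1 f2"
      have eE: "e \<in> path_edges a b"
        using False \<open>\<not> (f1 \<and> f2)\<close> rng unfolding e_def gedge_def mem_E by auto
      define g where "g u = ennreal (if u then X else Y)" for u
      have "(\<integral>\<^sup>+A. ennreal (l A) \<partial>activation p a b) = (\<integral>\<^sup>+A. g (e \<in> A) \<partial>activation p a b)"
        using False by (intro nn_integral_cong) (auto simp: l_def g_def K_def X_def Y_def diff_divide_distrib e_def gedge_def)
      also have "\<dots> = ennreal X * ennreal p + ennreal Y * ennreal (1 - p)"
        using p by (subst nn_act1[OF eE]) (auto simp: g_def)
      also have "\<dots> = ennreal (X * p + Y * (1 - p))"
        using p X0 Y0 by (simp add: enn_lin)
      finally have I: "(\<integral>\<^sup>+A. ennreal (l A) \<partial>activation p a b) = ennreal (X * p + Y * (1 - p))" .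
      define cst where "cst = (if f1 then 0 else real a / L) + (if f2 then 0 else real b / L)"
      have c1: "clow a b h = ennreal cst"
        by (simp add: clow_def cst_def f1_def f2_def L_def)
      have cst0: "0 \<le> cst" unfolding cst_def using L1 by simp
      have DL: "D / L \<le> cst" unfolding D_def Dh_def cst_def using False \<open>\<not> (f1 \<and> f2)\<close> L1
        by (auto simp: L_def add_divide_distrib[symmetric])
      have "Y \<le> cst + (X * p + Y * (1 - p))"
      proof -
        have "Y - (X * p + Y * (1 - p)) = D / L"
          unfolding X_def Y_def using pL p L1 by (simp add: field_simps)
        then show ?thesis using DL by linarith
      qed
      then have "ennreal Y \<le> ennreal cst + ennreal (X * p + Y * (1 - p))"
        using X0 Y0 p cst0 by (simp add: ennreal_plus[symmetric] mult_nonneg_nonneg ennreal_leI del: ennreal_plus)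
      then show ?thesis using U_h I c1 by (simp add: Y_def W_def)
    qed
    show ?thesis using main int_le by (meson add_left_mono order_trans)
  qed
qed




lemma payoff_int:
  assumes "set_pmf \<eta> \<subseteq> path_edges a b"
  shows "payoff p a b \<eta> \<sigma> = (\<integral>\<^sup>+e. search_time p a b \<sigma> e \<partial>\<eta>)"
  unfolding payoff_def using assms
  by (subst nn_integral_measure_pmf_support[of "path_edges a b"]) (auto simp: mult.commute)

lemma ST_int: "search_time p a b \<sigma> e = (\<Sum>t. \<integral>\<^sup>+h. indicator {h. \<not> traversed_in e h} h \<partial>run p a b \<sigma> t)"
  unfolding search_time_def by (simp add: measure_pmf.emeasure_eq_measure[symmetric])

lemma extreme_int:
  assumes "1 \<le> a" "1 \<le> b"
  shows "(\<integral>\<^sup>+e. f e \<partial>extreme_hider a b) =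
     f (int a - 1) * ennreal (real a / (real a + real b)) + f (- int b) * ennreal (real b / (real a + real b))"
proof -
  have "(\<integral>\<^sup>+e. f e \<partial>extreme_hider a b) =
     f (int a - 1) * ennreal (real a / (real a + real b)) + f (- int b) * ennreal (1 - real a / (real a + real b))"
    unfolding extreme_hider_def using assms by simp
  moreover have "1 - real a / (real a + real b) = real b / (real a + real b)"
    using assms by (simp add: field_simps)
  ultimately show ?thesis by simp
qed

lemma extreme_set: "set_pmf (extreme_hider a b) \<subseteq> path_edges a b" if "1 \<le> a" "1 \<le> b"
  using that unfolding extreme_hider_def by (auto simp: mem_E)

lemma clow_split:
  assumes "1 \<le> a" "1 \<le> b"
  shows "clow a b h = ennreal (real a / (real a + real b)) * indicator {h. \<not> traversed_in (int a - 1) h} h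
     + ennreal (real b / (real a + real b)) * indicator {h. \<not> traversed_in (- int b) h} h"
  unfolding clow_def using assms by (auto simp: ennreal_plus)

theorem hider_bound:
  assumes p: "0 < p" "p \<le> 1" and ab: "1 \<le> a" "1 \<le> b" and \<sigma>: "valid_strategy a b \<sigma>"
  shows "ennreal (real (a + b) / p + 1 / (1 - (1 - p)^2) - 1 / p) \<le> payoff p a b (extreme_hider a b) \<sigma>"
proof -
  define L where "L = real a + real b"
  define q where "q = qq p a b"
  have L1: "L \<ge> 2" "real a \<ge> 1" "real b \<ge> 1" using ab by (auto simp: L_def)
  have rr: "0 < 1 - (1 - p)^2" using p by (rule r_pos)
  have q0: "0 \<le> q" unfolding q_def qq_def using rr p L1 by (simp add: L_def)
  have reach: "\<And>t h. h \<in> set_pmf (run p a b \<sigma> t) \<Longrightarrow> Rlow a b h"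
    by (rule run_reach[of "Rlow a b"]) (auto intro: Rlow_Nil[OF ab] Rlow_step[OF \<sigma>])
  define K where "K = ennreal ((L * L + q) / p)"
  have bound: "Ulow p a b h \<le> K * clow a b h" if R: "Rlow a b h" for h
  proof -
    define x where "x = cur_pos h"
    define f1 where "f1 = traversed_in (int a - 1) h"
    define f2 where "f2 = traversed_in (- int b) h"
    have rng: "- int b \<le> x" "x \<le> int a" "x = int a \<longrightarrow> f1" "x = - int b \<longrightarrow> f2"
      using R by (auto simp: Rlow_def x_def f1_def f2_def)
    note WD = WD_facts[OF ab q0 rng]
    have U_h: "Ulow p a b h = ennreal (Wh a b q x f1 f2 / (p * L))"
      by (simp add: Ulow_def x_def f1_def f2_def q_def L_def)
    define cst where "cst = (if f1 then 0 else real a / L) + (if f2 then 0 else real b / L)"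
    have c1: "clow a b h = ennreal cst"
      by (simp add: clow_def cst_def f1_def f2_def L_def)
    show ?thesis
    proof (cases "f1 \<and> f2")
      case True then show ?thesis by (simp add: U_h Wh_def)
    next
      case False
      have d: "1 / L \<le> real a / L" "1 / L \<le> real b / L" "0 \<le> real a / L" "0 \<le> real b / L"
        using L1 by (auto intro: divide_right_mono)
      have "1 / L \<le> cst" using False d unfolding cst_def by auto
      moreover have "0 \<le> (L * L + q) / p" using q0 p by simp
      ultimately have "(L * L + q) / p * (1 / L) \<le> (L * L + q) / p * cst"
        by (intro mult_left_mono) auto
      moreover have "Wh a b q x f1 f2 / (p * L) \<le> (L * L + q) / p * (1 / L)"
        using WD(3) p L1 by (simp add: L_def divide_right_mono field_simps)
      ultimately have "Wh a b q x f1 f2 / (p * L) \<le> (L * L + q) / p * cst" by linarith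
      moreover have "0 \<le> cst" using d unfolding cst_def by auto
      ultimately show ?thesis using q0 p unfolding U_h c1 K_def
        by (subst ennreal_mult[symmetric]) (auto intro: ennreal_leI)
    qed
  qed
  have low: "Ulow p a b [] \<le> (\<Sum>t. \<integral>\<^sup>+h. clow a b h \<partial>run p a b \<sigma> t)"
  proof (rule lower_potential[where R="Rlow a b" and K=K])
    show "K \<noteq> \<top>" by (simp add: K_def)
  qed (auto intro: reach lower_step[OF p ab \<sigma>] bound)
  have start: "Ulow p a b [] = ennreal (real (a + b) / p + 1 / (1 - (1 - p)^2) - 1 / p)"
  proof -
    define r where "r = 1 - (1 - p)^2"
    have r0: "0 < r" using rr by (simp add: r_def)
    have "Wh a b q 0 False False = L * (L - 1) + L * p / r"
      by (simp add: Wh_def q_def qq_def L_def r_def)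
    also have "\<dots> / (p * L) = L / p + 1 / r - 1 / p"
      using p r0 L1 by (simp add: field_simps)
    finally have "Wh a b q 0 False False / (p * L) = real (a + b) / p + 1 / (1 - (1 - p)^2) - 1 / p"
      by (simp add: r_def L_def)
    then show ?thesis by (simp add: Ulow_def q_def L_def)
  qed
  have "(\<Sum>t. \<integral>\<^sup>+h. clow a b h \<partial>run p a b \<sigma> t) =
     (\<Sum>t. ennreal (real a / L) * (\<integral>\<^sup>+h. indicator {h. \<not> traversed_in (int a - 1) h} h \<partial>run p a b \<sigma> t)
         + ennreal (real b / L) * (\<integral>\<^sup>+h. indicator {h. \<not> traversed_in (- int b) h} h \<partial>run p a b \<sigma> t))"
    by (simp add: clow_split[OF ab] nn_integral_add nn_integral_cmult L_def)
  also have "\<dots> = ennreal (real a / L) * search_time p a b \<sigma> (int a - 1) + ennreal (real b / L) * search_time p a b \<sigma> (- int b)"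
    by (simp add: ST_int suminf_add[symmetric])
  also have "\<dots> = payoff p a b (extreme_hider a b) \<sigma>"
    by (simp add: payoff_int[OF extreme_set[OF ab]] extreme_int[OF ab] L_def mult.commute)
  finally show ?thesis using low start by simp
qed




lemma out_set:
  assumes "1 \<le> a" "1 \<le> b" "- int b \<le> x" "x \<le> int a"
  shows "{e \<in> path_edges a b. parent_end e = x} =
    (if x > 0 then (if x < int a then {x} else {}) else if x = 0 then {0, -1} else (if x > - int b then {x - 1} else {}))"
  using assms by (auto simp: mem_E parent_end_def split: if_splits)

lemma in_set:
  assumes "- int b \<le> x" "x \<le> int a"
  shows "{e \<in> path_edges a b. child_end e = x} = (if x > 0 then {x - 1} else if x < 0 then {x} else {})"
  using assms by (auto simp: mem_E child_end_def split: if_splits)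

lemma the_in:
  assumes "- int b \<le> x" "x \<le> int a"
  shows "x > 0 \<Longrightarrow> (THE e. e \<in> path_edges a b \<and> child_end e = x) = x - 1"
    and "x < 0 \<Longrightarrow> (THE e. e \<in> path_edges a b \<and> child_end e = x) = x"
proof -
  assume "x > 0"
  then have "{e \<in> path_edges a b. child_end e = x} = {x - 1}" using in_set[OF assms] by simp
  then have "\<And>e. (e \<in> path_edges a b \<and> child_end e = x) = (e = x - 1)" by blast
  then show "(THE e. e \<in> path_edges a b \<and> child_end e = x) = x - 1" by simp
next
  assume "x < 0"
  then have "{e \<in> path_edges a b. child_end e = x} = {x}" using in_set[OF assms] by simp
  then have "\<And>e. (e \<in> path_edges a b \<and> child_end e = x) = (e = x)" by blast
  then show "(THE e. e \<in> path_edges a b \<and> child_end e = x) = x" by simp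
qed

lemma dfs_unfold:
  "uniform_dfs a b h A =
    (if ({e \<in> path_edges a b. parent_end e = cur_pos h} - traversed_set a b h) \<inter> A \<noteq> {}
        then map_pmf child_end (pmf_of_set (({e \<in> path_edges a b. parent_end e = cur_pos h} - traversed_set a b h) \<inter> A))
        else if ({e \<in> path_edges a b. parent_end e = cur_pos h} - traversed_set a b h) \<noteq> {} then return_pmf (cur_pos h)
        else if (\<exists>e \<in> path_edges a b \<inter> A. child_end e = cur_pos h)
             then return_pmf (parent_end (THE e. e \<in> path_edges a b \<and> child_end e = cur_pos h))
        else return_pmf (cur_pos h))"
  by (simp add: uniform_dfs_def Let_def)

context
  fixes a b :: nat and h :: history and x :: int and T :: "int set"
  assumes ab: "1 \<le> a" "1 \<le> b" and xr: "- int b \<le> x" "x \<le> int a"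
    and xh: "cur_pos h = x" and Th: "traversed_set a b h = T"
begin

lemma dfs_L1: "0 < x \<Longrightarrow> x < int a \<Longrightarrow> x \<notin> T \<Longrightarrow>
   uniform_dfs a b h A = (if x \<in> A then return_pmf (x + 1) else return_pmf x)"
proof -
  assume "0 < x" "x < int a" "x \<notin> T"
  then have O: "{e \<in> path_edges a b. parent_end e = x} - T = {x}" using out_set[OF ab xr] by auto
  show ?thesis unfolding dfs_unfold xh Th O using \<open>0 < x\<close> by (auto simp: child_end_def pmf_of_set_singleton)
qed

lemma dfs_L2: "0 < x \<Longrightarrow> (x = int a \<or> x \<in> T) \<Longrightarrow>
   uniform_dfs a b h A = (if x - 1 \<in> A then return_pmf (x - 1) else return_pmf x)"
proof -
  assume "0 < x" "x = int a \<or> x \<in> T"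
  then have O: "{e \<in> path_edges a b. parent_end e = x} - T = {}" using out_set[OF ab xr] by auto
  have "{e \<in> path_edges a b. child_end e = x} = {x - 1}" using in_set[OF xr] \<open>0 < x\<close> by simp
  then have ex: "(\<exists>e \<in> path_edges a b \<inter> A. child_end e = x) = (x - 1 \<in> A)"
    unfolding set_eq_iff mem_Collect_eq by (metis IntE IntI singletonD singletonI)
  show ?thesis unfolding dfs_unfold xh Th O ex the_in(1)[OF xr \<open>0 < x\<close>]
    using \<open>0 < x\<close> by (simp add: parent_end_def)
qed

lemma dfs_L3: "x < 0 \<Longrightarrow> - int b < x \<Longrightarrow> x - 1 \<notin> T \<Longrightarrow>
   uniform_dfs a b h A = (if x - 1 \<in> A then return_pmf (x - 1) else return_pmf x)"
proof -
  assume "x < 0" "- int b < x" "x - 1 \<notin> T"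
  then have O: "{e \<in> path_edges a b. parent_end e = x} - T = {x - 1}" using out_set[OF ab xr] by auto
  show ?thesis unfolding dfs_unfold xh Th O using \<open>x < 0\<close> by (simp add: child_end_def pmf_of_set_singleton)
qed

lemma dfs_L4: "x < 0 \<Longrightarrow> (x = - int b \<or> x - 1 \<in> T) \<Longrightarrow>
   uniform_dfs a b h A = (if x \<in> A then return_pmf (x + 1) else return_pmf x)"
proof -
  assume "x < 0" "x = - int b \<or> x - 1 \<in> T"
  then have O: "{e \<in> path_edges a b. parent_end e = x} - T = {}" using out_set[OF ab xr] by auto
  have "{e \<in> path_edges a b. child_end e = x} = {x}" using in_set[OF xr] \<open>x < 0\<close> by simp
  then have ex: "(\<exists>e \<in> path_edges a b \<inter> A. child_end e = x) = (x \<in> A)"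
    unfolding set_eq_iff mem_Collect_eq by (metis IntE IntI singletonD singletonI)
  show ?thesis unfolding dfs_unfold xh Th O ex the_in(2)[OF xr \<open>x < 0\<close>]
    using \<open>x < 0\<close> by (simp add: parent_end_def)
qed

lemma dfs_L5: "x = 0 \<Longrightarrow> 0 \<in> T \<Longrightarrow> -1 \<in> T \<Longrightarrow> uniform_dfs a b h A = return_pmf 0"
proof -
  assume "x = 0" "0 \<in> T" "-1 \<in> T"
  then have O: "{e \<in> path_edges a b. parent_end e = x} - T = {}" using out_set[OF ab xr] by auto
  have ex: "\<not> (\<exists>e \<in> path_edges a b \<inter> A. child_end e = x)"
    using in_set[OF xr] \<open>x = 0\<close> by (auto simp: set_eq_iff)
  show ?thesis unfolding dfs_unfold xh Th O using ex \<open>x = 0\<close> by simp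
qed

lemma dfs_L6: "x = 0 \<Longrightarrow> 0 \<notin> T \<Longrightarrow> -1 \<in> T \<Longrightarrow>
   uniform_dfs a b h A = (if 0 \<in> A then return_pmf 1 else return_pmf 0)"
proof -
  assume "x = 0" "0 \<notin> T" "-1 \<in> T"
  then have O: "{e \<in> path_edges a b. parent_end e = x} - T = {0}" using out_set[OF ab xr] by auto
  show ?thesis unfolding dfs_unfold xh Th O using \<open>x = 0\<close> by (simp add: child_end_def pmf_of_set_singleton)
qed

lemma dfs_L7: "x = 0 \<Longrightarrow> 0 \<in> T \<Longrightarrow> -1 \<notin> T \<Longrightarrow>
   uniform_dfs a b h A = (if -1 \<in> A then return_pmf (-1) else return_pmf 0)"
proof -
  assume "x = 0" "0 \<in> T" "-1 \<notin> T"
  then have O: "{e \<in> path_edges a b. parent_end e = x} - T = {-1}" using out_set[OF ab xr] by auto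
  show ?thesis unfolding dfs_unfold xh Th O using \<open>x = 0\<close> by (simp add: child_end_def pmf_of_set_singleton)
qed

lemma dfs_L8: "x = 0 \<Longrightarrow> 0 \<notin> T \<Longrightarrow> -1 \<notin> T \<Longrightarrow>
   uniform_dfs a b h A = (if 0 \<in> A \<and> -1 \<in> A then pmf_of_set {1, -1}
      else if 0 \<in> A then return_pmf 1 else if -1 \<in> A then return_pmf (-1) else return_pmf 0)"
proof -
  assume "x = 0" "0 \<notin> T" "-1 \<notin> T"
  then have O: "{e \<in> path_edges a b. parent_end e = x} - T = {0, -1}" using out_set[OF ab xr] by auto
  have m: "map_pmf child_end (pmf_of_set {0, -1}) = pmf_of_set {1, -1}"
  proof -
    have "map_pmf child_end (pmf_of_set {0, -1}) = pmf_of_set (child_end ` {0, -1})"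
      by (subst map_pmf_of_set_inj) (auto simp: child_end_def inj_on_def)
    also have "child_end ` {0, -1} = {1, -1}" by (auto simp: child_end_def)
    finally show ?thesis .
  qed
  show ?thesis
  proof (cases "0 \<in> A \<and> -1 \<in> A")
    case True
    then have c: "{0, -1} \<inter> A = {0, -1}" by auto
    show ?thesis unfolding dfs_unfold xh Th O c using True m by simp
  next
    case False
    then have c: "{0, -1} \<inter> A = (if 0 \<in> A then {0} else if -1 \<in> A then {-1} else {})" by auto
    show ?thesis unfolding dfs_unfold xh Th O c using False \<open>x = 0\<close>
      by (simp add: child_end_def pmf_of_set_singleton)
  qed
qed

end




lemma child_end_inj: "child_end e = child_end e' \<Longrightarrow> e = e'"
  by (auto simp: child_end_def split: if_splits)

lemma crosses_pc: "crosses e (parent_end e) (child_end e)" "crosses e (child_end e) (parent_end e)"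
  by (auto simp: crosses_iff parent_end_def child_end_def)

lemma dfs_valid: "valid_strategy a b (uniform_dfs a b)"
  unfolding valid_strategy_def
proof (intro allI ballI)
  fix h A v
  assume v: "v \<in> set_pmf (uniform_dfs a b h A)"
  define u where "u = cur_pos h"
  define Ou where "Ou = {e \<in> path_edges a b. parent_end e = u} - traversed_set a b h"
  have fin: "finite (Ou \<inter> A)" unfolding Ou_def by (rule finite_subset[of _ "path_edges a b"]) auto
  show "legal_move a b A (cur_pos h) v"
  proof (cases "Ou \<inter> A \<noteq> {}")
    case True
    then have "v \<in> child_end ` (Ou \<inter> A)"
      using v fin unfolding dfs_unfold Ou_def u_def by simp
    then obtain e where e: "e \<in> Ou" "e \<in> A" "v = child_end e" by auto
    then have "e \<in> path_edges a b" "parent_end e = u" by (auto simp: Ou_def)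
    then show ?thesis using e crosses_pc(1)[of e] unfolding legal_move_def u_def by auto
  next
    case False
    show ?thesis
    proof (cases "\<exists>e \<in> path_edges a b \<inter> A. child_end e = u")
      case True
      then obtain e where e: "e \<in> path_edges a b" "e \<in> A" "child_end e = u" by auto
      then have the: "(THE e. e \<in> path_edges a b \<and> child_end e = u) = e"
        by (auto intro: child_end_inj)
      have "v = u \<or> v = parent_end e"
        using v False True unfolding dfs_unfold Ou_def[symmetric] u_def[symmetric] the
        by (auto split: if_splits)
      then show ?thesis using e crosses_pc(2)[of e] unfolding legal_move_def u_def by auto
    next
      case c2: False
      have "v = u"
        using v False c2 unfolding dfs_unfold Ou_def[symmetric] u_def[symmetric]
        by (auto split: if_splits)
      then show ?thesis unfolding legal_move_def u_def by auto
    qed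
  qed
qed




definition st :: "nat \<Rightarrow> nat \<Rightarrow> bool \<Rightarrow> int \<Rightarrow> int \<times> int set" where
  "st a b r k = (if r then
      (if k \<le> int a then (k, {0..<k})
       else if k \<le> 2 * int a then (2 * int a - k, {0..<int a})
       else if k \<le> 2 * int a + int b then (2 * int a - k, {2 * int a - k..<int a})
       else (k - 2 * int a - 2 * int b, {- int b..<int a}))
    else
      (if k \<le> int b then (- k, {- k..<0})
       else if k \<le> 2 * int b then (k - 2 * int b, {- int b..<0})
       else if k \<le> 2 * int b + int a then (k - 2 * int b, {- int b..<k - 2 * int b})
       else (2 * int a + 2 * int b - k, {- int b..<int a})))"

definition gE :: "nat \<Rightarrow> nat \<Rightarrow> bool \<Rightarrow> int \<Rightarrow> int" where
  "gE a b r k = (if r then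
      (if k < int a then k else if k < 2 * int a + int b then 2 * int a - k - 1 else k - 2 * int a - 2 * int b)
    else
      (if k < int b then - k - 1 else if k < 2 * int b + int a then k - 2 * int b else 2 * int a + 2 * int b - k - 1))"

lemma ivl_up: "(lo::int) \<le> hi \<Longrightarrow> {lo..<hi+1} = {lo..<hi} \<union> {hi}"
  by auto

lemma ivl_down: "(lo::int) \<le> hi \<Longrightarrow> {lo-1..<hi} = {lo..<hi} \<union> {lo-1}"
  by auto

lemma un_absorb: "(g::int) \<in> T \<Longrightarrow> T = T \<union> {g}"
  by auto

lemma st_step:
  fixes r :: bool
  assumes ab: "1 \<le> a" "1 \<le> b" and k: "1 \<le> k" "k < 2 * (int a + int b)"
  defines "x \<equiv> fst (st a b r k)" and "T \<equiv> snd (st a b r k)" and "x' \<equiv> fst (st a b r (k + 1))" and "g \<equiv> gE a b r k"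
  shows "g \<in> path_edges a b"
    and "snd (st a b r (k + 1)) = T \<union> {g}"
    and "(x' = x + 1 \<and> g = x) \<or> (x' = x - 1 \<and> g = x - 1)"
    and "cur_pos h = x \<Longrightarrow> traversed_set a b h = T \<Longrightarrow>
           uniform_dfs a b h A = (if g \<in> A then return_pmf x' else return_pmf x)"
proof -
  have "g \<in> path_edges a b \<and> snd (st a b r (k + 1)) = T \<union> {g} \<and> ((x' = x + 1 \<and> g = x) \<or> (x' = x - 1 \<and> g = x - 1))
     \<and> (cur_pos h = x \<longrightarrow> traversed_set a b h = T \<longrightarrow>
           uniform_dfs a b h A = (if g \<in> A then return_pmf x' else return_pmf x))"
  proof (cases r)
    case True
    consider (p1) "k < int a" | (p2a) "int a \<le> k" "k < 2 * int a - 1" | (p2b) "k = 2 * int a - 1" | (p3a) "k = 2 * int a" | (p3b) "2 * int a < k" "k < 2 * int a + int b" | (p4) "2 * int a + int b \<le> k"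
      by linarith
    then show ?thesis
    proof cases
      case p1
      then have xT: "x = k" "T = {0..<k}" "x' = k + 1" "g = k" "snd (st a b r (k + 1)) = {0..<k+1}"
        using True k by (auto simp: x_def T_def x'_def g_def st_def gE_def)
      have r1: "- int b \<le> x" "x \<le> int a" using xT k p1 by auto
      have pre: "0 < x" "x < int a" "x \<notin> T" using xT k p1 ab by auto
      show ?thesis
      proof (intro conjI impI)
        show "g \<in> path_edges a b" using xT k p1 ab by (simp add: mem_E)
        have le: "0 \<le> k" using k p1 ab by simp
        show "snd (st a b r (k + 1)) = T \<union> {g}" unfolding xT(5) xT(2) xT(4) using ivl_up[OF le] by simp
        show "(x' = x + 1 \<and> g = x) \<or> (x' = x - 1 \<and> g = x - 1)" using xT by simp
        assume "cur_pos h = x" "traversed_set a b h = T"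
        from dfs_L1[OF ab r1 this pre] show "uniform_dfs a b h A = (if g \<in> A then return_pmf x' else return_pmf x)"
          using xT by simp
      qed
    next
      case p2a
      then have xT: "x = 2 * int a - k" "T = {0..<int a}" "x' = 2 * int a - k - 1" "g = 2 * int a - k - 1" "snd (st a b r (k + 1)) = {0..<int a}"
        using True k by (auto simp: x_def T_def x'_def g_def st_def gE_def)
      have r1: "- int b \<le> x" "x \<le> int a" using xT k p2a by auto
      have pre: "0 < x" "x = int a \<or> x \<in> T" using xT k p2a ab by auto
      show ?thesis
      proof (intro conjI impI)
        show "g \<in> path_edges a b" using xT k p2a ab by (simp add: mem_E)
        have gT: "g \<in> T" using xT k p2a ab by simp
        show "snd (st a b r (k + 1)) = T \<union> {g}" unfolding xT(5) using un_absorb[OF gT] xT(2) by simp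
        show "(x' = x + 1 \<and> g = x) \<or> (x' = x - 1 \<and> g = x - 1)" using xT by simp
        assume "cur_pos h = x" "traversed_set a b h = T"
        from dfs_L2[OF ab r1 this pre] show "uniform_dfs a b h A = (if g \<in> A then return_pmf x' else return_pmf x)"
          using xT by simp
      qed
    next
      case p2b
      then have xT: "x = 1" "T = {0..<int a}" "x' = 0" "g = 0" "snd (st a b r (k + 1)) = {0..<int a}"
        using True k by (auto simp: x_def T_def x'_def g_def st_def gE_def)
      have r1: "- int b \<le> x" "x \<le> int a" using xT k p2b by auto
      have pre: "0 < x" "x = int a \<or> x \<in> T" using xT k p2b ab by auto
      show ?thesis
      proof (intro conjI impI)
        show "g \<in> path_edges a b" using xT k p2b ab by (simp add: mem_E)
        have gT: "g \<in> T" using xT k p2b ab by simp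
        show "snd (st a b r (k + 1)) = T \<union> {g}" unfolding xT(5) using un_absorb[OF gT] xT(2) by simp
        show "(x' = x + 1 \<and> g = x) \<or> (x' = x - 1 \<and> g = x - 1)" using xT by simp
        assume "cur_pos h = x" "traversed_set a b h = T"
        from dfs_L2[OF ab r1 this pre] show "uniform_dfs a b h A = (if g \<in> A then return_pmf x' else return_pmf x)"
          using xT by simp
      qed
    next
      case p3a
      then have xT: "x = 0" "T = {0..<int a}" "x' = -1" "g = -1" "snd (st a b r (k + 1)) = {-1..<int a}"
        using True k by (auto simp: x_def T_def x'_def g_def st_def gE_def)
      have r1: "- int b \<le> x" "x \<le> int a" using xT k p3a by auto
      have pre: "x = 0" "0 \<in> T" "-1 \<notin> T" using xT k p3a ab by auto
      show ?thesis
      proof (intro conjI impI)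
        show "g \<in> path_edges a b" using xT k p3a ab by (simp add: mem_E)
        have le: "0 \<le> int a" using k p3a ab by simp
        show "snd (st a b r (k + 1)) = T \<union> {g}" unfolding xT(5) xT(2) xT(4) using ivl_down[OF le] by simp
        show "(x' = x + 1 \<and> g = x) \<or> (x' = x - 1 \<and> g = x - 1)" using xT by simp
        assume "cur_pos h = x" "traversed_set a b h = T"
        from dfs_L7[OF ab r1 this pre] show "uniform_dfs a b h A = (if g \<in> A then return_pmf x' else return_pmf x)"
          using xT by simp
      qed
    next
      case p3b
      then have xT: "x = 2 * int a - k" "T = {2 * int a - k..<int a}" "x' = 2 * int a - k - 1" "g = 2 * int a - k - 1" "snd (st a b r (k + 1)) = {2 * int a - k - 1..<int a}"
        using True k by (auto simp: x_def T_def x'_def g_def st_def gE_def)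
      have r1: "- int b \<le> x" "x \<le> int a" using xT k p3b by auto
      have pre: "x < 0" "- int b < x" "x - 1 \<notin> T" using xT k p3b ab by auto
      show ?thesis
      proof (intro conjI impI)
        show "g \<in> path_edges a b" using xT k p3b ab by (simp add: mem_E)
        have le: "2 * int a - k \<le> int a" using k p3b ab by simp
        show "snd (st a b r (k + 1)) = T \<union> {g}" unfolding xT(5) xT(2) xT(4) using ivl_down[OF le] by simp
        show "(x' = x + 1 \<and> g = x) \<or> (x' = x - 1 \<and> g = x - 1)" using xT by simp
        assume "cur_pos h = x" "traversed_set a b h = T"
        from dfs_L3[OF ab r1 this pre] show "uniform_dfs a b h A = (if g \<in> A then return_pmf x' else return_pmf x)"
          using xT by simp
      qed
    next
      case p4
      then have xT: "x = k - 2 * int a - 2 * int b" "T = {- int b..<int a}" "x' = k + 1 - 2 * int a - 2 * int b" "g = k - 2 * int a - 2 * int b" "snd (st a b r (k + 1)) = {- int b..<int a}"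
        using True k by (auto simp: x_def T_def x'_def g_def st_def gE_def)
      have r1: "- int b \<le> x" "x \<le> int a" using xT k p4 by auto
      have pre: "x < 0" "x = - int b \<or> x - 1 \<in> T" using xT k p4 ab by auto
      show ?thesis
      proof (intro conjI impI)
        show "g \<in> path_edges a b" using xT k p4 ab by (simp add: mem_E)
        have gT: "g \<in> T" using xT k p4 ab by simp
        show "snd (st a b r (k + 1)) = T \<union> {g}" unfolding xT(5) using un_absorb[OF gT] xT(2) by simp
        show "(x' = x + 1 \<and> g = x) \<or> (x' = x - 1 \<and> g = x - 1)" using xT by simp
        assume "cur_pos h = x" "traversed_set a b h = T"
        from dfs_L4[OF ab r1 this pre] show "uniform_dfs a b h A = (if g \<in> A then return_pmf x' else return_pmf x)"
          using xT by simp
      qed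
    qed
  next
    case False
    consider (p1) "k < int b" | (p2) "int b \<le> k" "k < 2 * int b" | (p3a) "k = 2 * int b" | (p3b) "2 * int b < k" "k < 2 * int b + int a" | (p4) "2 * int b + int a \<le> k"
      by linarith
    then show ?thesis
    proof cases
      case p1
      then have xT: "x = - k" "T = {- k..<0}" "x' = - k - 1" "g = - k - 1" "snd (st a b r (k + 1)) = {- k - 1..<0}"
        using False k by (auto simp: x_def T_def x'_def g_def st_def gE_def)
      have r1: "- int b \<le> x" "x \<le> int a" using xT k p1 by auto
      have pre: "x < 0" "- int b < x" "x - 1 \<notin> T" using xT k p1 ab by auto
      show ?thesis
      proof (intro conjI impI)
        show "g \<in> path_edges a b" using xT k p1 ab by (simp add: mem_E)
        have le: "- k \<le> 0" using k p1 ab by simp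
        show "snd (st a b r (k + 1)) = T \<union> {g}" unfolding xT(5) xT(2) xT(4) using ivl_down[OF le] by simp
        show "(x' = x + 1 \<and> g = x) \<or> (x' = x - 1 \<and> g = x - 1)" using xT by simp
        assume "cur_pos h = x" "traversed_set a b h = T"
        from dfs_L3[OF ab r1 this pre] show "uniform_dfs a b h A = (if g \<in> A then return_pmf x' else return_pmf x)"
          using xT by simp
      qed
    next
      case p2
      then have xT: "x = k - 2 * int b" "T = {- int b..<0}" "x' = k - 2 * int b + 1" "g = k - 2 * int b" "snd (st a b r (k + 1)) = {- int b..<0}"
        using False k by (auto simp: x_def T_def x'_def g_def st_def gE_def)
      have r1: "- int b \<le> x" "x \<le> int a" using xT k p2 by auto
      have pre: "x < 0" "x = - int b \<or> x - 1 \<in> T" using xT k p2 ab by auto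
      show ?thesis
      proof (intro conjI impI)
        show "g \<in> path_edges a b" using xT k p2 ab by (simp add: mem_E)
        have gT: "g \<in> T" using xT k p2 ab by simp
        show "snd (st a b r (k + 1)) = T \<union> {g}" unfolding xT(5) using un_absorb[OF gT] xT(2) by simp
        show "(x' = x + 1 \<and> g = x) \<or> (x' = x - 1 \<and> g = x - 1)" using xT by simp
        assume "cur_pos h = x" "traversed_set a b h = T"
        from dfs_L4[OF ab r1 this pre] show "uniform_dfs a b h A = (if g \<in> A then return_pmf x' else return_pmf x)"
          using xT by simp
      qed
    next
      case p3a
      then have xT: "x = 0" "T = {- int b..<0}" "x' = 1" "g = 0" "snd (st a b r (k + 1)) = {- int b..<1}"
        using False k by (auto simp: x_def T_def x'_def g_def st_def gE_def)
      have r1: "- int b \<le> x" "x \<le> int a" using xT k p3a by auto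
      have pre: "x = 0" "0 \<notin> T" "-1 \<in> T" using xT k p3a ab by auto
      show ?thesis
      proof (intro conjI impI)
        show "g \<in> path_edges a b" using xT k p3a ab by (simp add: mem_E)
        have le: "- int b \<le> 0" using k p3a ab by simp
        show "snd (st a b r (k + 1)) = T \<union> {g}" unfolding xT(5) xT(2) xT(4) using ivl_up[OF le] by simp
        show "(x' = x + 1 \<and> g = x) \<or> (x' = x - 1 \<and> g = x - 1)" using xT by simp
        assume "cur_pos h = x" "traversed_set a b h = T"
        from dfs_L6[OF ab r1 this pre] show "uniform_dfs a b h A = (if g \<in> A then return_pmf x' else return_pmf x)"
          using xT by simp
      qed
    next
      case p3b
      then have xT: "x = k - 2 * int b" "T = {- int b..<k - 2 * int b}" "x' = k - 2 * int b + 1" "g = k - 2 * int b" "snd (st a b r (k + 1)) = {- int b..<k - 2 * int b + 1}"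
        using False k by (auto simp: x_def T_def x'_def g_def st_def gE_def)
      have r1: "- int b \<le> x" "x \<le> int a" using xT k p3b by auto
      have pre: "0 < x" "x < int a" "x \<notin> T" using xT k p3b ab by auto
      show ?thesis
      proof (intro conjI impI)
        show "g \<in> path_edges a b" using xT k p3b ab by (simp add: mem_E)
        have le: "- int b \<le> k - 2 * int b" using k p3b ab by simp
        show "snd (st a b r (k + 1)) = T \<union> {g}" unfolding xT(5) xT(2) xT(4) using ivl_up[OF le] by simp
        show "(x' = x + 1 \<and> g = x) \<or> (x' = x - 1 \<and> g = x - 1)" using xT by simp
        assume "cur_pos h = x" "traversed_set a b h = T"
        from dfs_L1[OF ab r1 this pre] show "uniform_dfs a b h A = (if g \<in> A then return_pmf x' else return_pmf x)"
          using xT by simp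
      qed
    next
      case p4
      then have xT: "x = 2 * int a + 2 * int b - k" "T = {- int b..<int a}" "x' = 2 * int a + 2 * int b - k - 1" "g = 2 * int a + 2 * int b - k - 1" "snd (st a b r (k + 1)) = {- int b..<int a}"
        using False k by (auto simp: x_def T_def x'_def g_def st_def gE_def)
      have r1: "- int b \<le> x" "x \<le> int a" using xT k p4 by auto
      have pre: "0 < x" "x = int a \<or> x \<in> T" using xT k p4 ab by auto
      show ?thesis
      proof (intro conjI impI)
        show "g \<in> path_edges a b" using xT k p4 ab by (simp add: mem_E)
        have gT: "g \<in> T" using xT k p4 ab by simp
        show "snd (st a b r (k + 1)) = T \<union> {g}" unfolding xT(5) using un_absorb[OF gT] xT(2) by simp
        show "(x' = x + 1 \<and> g = x) \<or> (x' = x - 1 \<and> g = x - 1)" using xT by simp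
        assume "cur_pos h = x" "traversed_set a b h = T"
        from dfs_L2[OF ab r1 this pre] show "uniform_dfs a b h A = (if g \<in> A then return_pmf x' else return_pmf x)"
          using xT by simp
      qed
    qed
  qed
  then show "g \<in> path_edges a b"
    and "snd (st a b r (k + 1)) = T \<union> {g}"
    and "(x' = x + 1 \<and> g = x) \<or> (x' = x - 1 \<and> g = x - 1)"
    and "cur_pos h = x \<Longrightarrow> traversed_set a b h = T \<Longrightarrow>
           uniform_dfs a b h A = (if g \<in> A then return_pmf x' else return_pmf x)" by blast+
qed




definition fc :: "nat \<Rightarrow> nat \<Rightarrow> bool \<Rightarrow> int \<Rightarrow> int" where
  "fc a b r e = (if r then (if 0 \<le> e then e + 1 else 2 * int a - e) else (if e < 0 then - e else 2 * int b + e + 1))"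

definition dd :: "nat \<Rightarrow> nat \<Rightarrow> int \<Rightarrow> int \<Rightarrow> int set \<Rightarrow> int" where
  "dd a b e x T = (if 0 \<le> e then (if x < 0 \<and> - int b \<notin> T then x + 2 * int b + e + 1 else e - x + 1)
     else (if 0 < x \<and> int a - 1 \<notin> T then 2 * int a - x - e else x - e))"

lemma st_0: "st a b r 0 = (0, {})"
  by (simp add: st_def)

lemma st_1: "1 \<le> a \<Longrightarrow> 1 \<le> b \<Longrightarrow> st a b True 1 = (1, {0})" "1 \<le> a \<Longrightarrow> 1 \<le> b \<Longrightarrow> st a b False 1 = (-1, {-1})"
  by (auto simp: st_def)

lemma st_end: "1 \<le> a \<Longrightarrow> 1 \<le> b \<Longrightarrow> st a b r (2 * (int a + int b)) = (0, path_edges a b)"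
  by (auto simp: st_def path_edges_def)

lemma st_range:
  assumes "1 \<le> a" "1 \<le> b" "0 \<le> k" "k \<le> 2 * (int a + int b)"
  shows "- int b \<le> fst (st a b r k)" "fst (st a b r k) \<le> int a"
  using assms by (auto simp: st_def)

lemma st_mem:
  assumes ab: "1 \<le> a" "1 \<le> b" and k: "0 \<le> k" "k \<le> 2 * (int a + int b)" and e: "e \<in> path_edges a b"
  shows "e \<in> snd (st a b r k) \<longleftrightarrow> fc a b r e \<le> k"
  using assms unfolding mem_E by (cases r) (auto simp: st_def fc_def)

lemma st_sub:
  assumes ab: "1 \<le> a" "1 \<le> b" and k: "0 \<le> k" "k \<le> 2 * (int a + int b)"
  shows "snd (st a b r k) \<subseteq> path_edges a b"
  using assms unfolding path_edges_def by (cases r) (auto simp: st_def)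

lemma st_nonempty:
  assumes ab: "1 \<le> a" "1 \<le> b" and k: "1 \<le> k" "k \<le> 2 * (int a + int b)"
  shows "snd (st a b r k) \<noteq> {}"
proof -
  have "(if r then 0 else -1) \<in> snd (st a b r k)"
    using assms by (cases r) (auto simp: st_def)
  then show ?thesis by auto
qed

lemma st_dd:
  assumes ab: "1 \<le> a" "1 \<le> b" and k: "1 \<le> k" "k \<le> 2 * (int a + int b)" and e: "e \<in> path_edges a b"
    and ne: "e \<notin> snd (st a b r k)"
  shows "dd a b e (fst (st a b r k)) (snd (st a b r k)) = fc a b r e - k"
  using assms unfolding mem_E by (cases r) (auto simp: st_def fc_def dd_def split: if_splits)

lemma fc_bounds:
  assumes ab: "1 \<le> a" "1 \<le> b" and e: "e \<in> path_edges a b"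
  shows "1 \<le> fc a b r e" "fc a b r e \<le> 2 * (int a + int b)"
  using assms unfolding mem_E by (auto simp: fc_def)




lemma TS_snoc: "traversed_set a b (h @ [(A,v)]) = traversed_set a b h \<union> {e \<in> path_edges a b. crosses e (cur_pos h) v}"
  by (auto simp: traversed_set_def traversed_snoc)

lemma TS_stay: "traversed_set a b (h @ [(A, cur_pos h)]) = traversed_set a b h"
  by (simp add: TS_snoc crosses_def)

lemma cross_set:
  assumes "g \<in> path_edges a b" "(x' = x + 1 \<and> g = x) \<or> (x' = x - 1 \<and> g = x - 1)"
  shows "{e \<in> path_edges a b. crosses e x x'} = {g}"
  using assms by (auto simp: crosses_iff)

lemma trav_iff: "e \<in> path_edges a b \<Longrightarrow> traversed_in e h \<longleftrightarrow> e \<in> traversed_set a b h"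
  by (simp add: traversed_set_def)

definition Rup :: "nat \<Rightarrow> nat \<Rightarrow> history \<Rightarrow> bool" where
  "Rup a b h \<longleftrightarrow> (\<exists>r k. 0 \<le> k \<and> k \<le> 2 * (int a + int b) \<and> (cur_pos h, traversed_set a b h) = st a b r k)"

lemma next_state:
  fixes r :: bool
  assumes ab: "1 \<le> a" "1 \<le> b" and k: "1 \<le> k" "k < 2 * (int a + int b)"
    and hs: "(cur_pos h, traversed_set a b h) = st a b r k"
  shows "uniform_dfs a b h A = (if gE a b r k \<in> A then return_pmf (fst (st a b r (k+1))) else return_pmf (cur_pos h))"
    and "(cur_pos (h @ [(A, fst (st a b r (k+1)))]), traversed_set a b (h @ [(A, fst (st a b r (k+1)))])) = st a b r (k + 1)"
proof -
  have x: "cur_pos h = fst (st a b r k)" and T: "traversed_set a b h = snd (st a b r k)"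
    using hs by (metis fst_conv, metis snd_conv)
  show "uniform_dfs a b h A = (if gE a b r k \<in> A then return_pmf (fst (st a b r (k+1))) else return_pmf (cur_pos h))"
    using st_step(4)[OF ab k x T, of A] x by simp
  have "traversed_set a b (h @ [(A, fst (st a b r (k+1)))]) = snd (st a b r k) \<union> {gE a b r k}"
    unfolding TS_snoc T x using cross_set[OF st_step(1)[OF ab k] st_step(3)[OF ab k]] by simp
  also have "\<dots> = snd (st a b r (k + 1))" using st_step(2)[OF ab k] by simp
  finally show "(cur_pos (h @ [(A, fst (st a b r (k+1)))]), traversed_set a b (h @ [(A, fst (st a b r (k+1)))])) = st a b r (k + 1)"
    by (simp add: prod_eq_iff)
qed

lemma end_state:
  assumes ab: "1 \<le> a" "1 \<le> b" and hs: "(cur_pos h, traversed_set a b h) = st a b r (2 * (int a + int b))"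
  shows "uniform_dfs a b h A = return_pmf (cur_pos h)"
proof -
  have x: "cur_pos h = 0" and T: "traversed_set a b h = path_edges a b"
    using hs st_end[OF ab, of r] by auto
  have r1: "- int b \<le> 0" "0 \<le> int a" by auto
  show ?thesis using dfs_L5[OF ab r1 x T] ab x by (simp add: mem_E)
qed

lemma start_state:
  assumes ab: "1 \<le> a" "1 \<le> b" and hs: "(cur_pos h, traversed_set a b h) = st a b r 0"
  shows "uniform_dfs a b h A = (if 0 \<in> A \<and> -1 \<in> A then pmf_of_set {1, -1}
      else if 0 \<in> A then return_pmf 1 else if -1 \<in> A then return_pmf (-1) else return_pmf 0)"
    and "(cur_pos (h @ [(A, 1)]), traversed_set a b (h @ [(A, 1)])) = st a b True 1"
    and "(cur_pos (h @ [(A, -1)]), traversed_set a b (h @ [(A, -1)])) = st a b False 1"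
    and "cur_pos h = 0"
proof -
  have x: "cur_pos h = 0" and T: "traversed_set a b h = {}"
    using hs by (auto simp: st_0)
  have r1: "- int b \<le> 0" "0 \<le> int a" by auto
  show "uniform_dfs a b h A = (if 0 \<in> A \<and> -1 \<in> A then pmf_of_set {1, -1}
      else if 0 \<in> A then return_pmf 1 else if -1 \<in> A then return_pmf (-1) else return_pmf 0)"
    using dfs_L8[OF ab r1 x T] by simp
  have "{e \<in> path_edges a b. crosses e 0 1} = {0}" using ab by (auto simp: crosses_iff mem_E)
  then show "(cur_pos (h @ [(A, 1)]), traversed_set a b (h @ [(A, 1)])) = st a b True 1"
    using st_1[OF ab] by (simp add: TS_snoc x T)
  have "{e \<in> path_edges a b. crosses e 0 (-1)} = {-1}" using ab by (auto simp: crosses_iff mem_E)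
  then show "(cur_pos (h @ [(A, -1)]), traversed_set a b (h @ [(A, -1)])) = st a b False 1"
    using st_1[OF ab] by (simp add: TS_snoc x T)
  show "cur_pos h = 0" by (rule x)
qed

lemma Rup_step:
  assumes ab: "1 \<le> a" "1 \<le> b" and R: "Rup a b h" and v: "v \<in> set_pmf (uniform_dfs a b h A)"
  shows "Rup a b (h @ [(A,v)])"
proof -
  obtain r k where k: "0 \<le> k" "k \<le> 2 * (int a + int b)" and hs: "(cur_pos h, traversed_set a b h) = st a b r k"
    using R by (auto simp: Rup_def)
  have stay: "Rup a b (h @ [(A, cur_pos h)])"
    unfolding Rup_def using k hs by (auto simp: TS_stay)
  consider "k = 0" | "1 \<le> k" "k < 2 * (int a + int b)" | "k = 2 * (int a + int b)" using k by linarith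
  then show ?thesis
  proof cases
    case 1
    note S = start_state[OF ab hs[unfolded 1]]
    have "v = 1 \<or> v = -1 \<or> v = cur_pos h" using v unfolding S(1) S(4) by (auto split: if_splits)
    moreover have "Rup a b (h @ [(A, 1)])" unfolding Rup_def
      by (rule exI[of _ True], rule exI[of _ 1]) (use S(2) ab in auto)
    moreover have "Rup a b (h @ [(A, -1)])" unfolding Rup_def
      by (rule exI[of _ False], rule exI[of _ 1]) (use S(3) ab in auto)
    ultimately show ?thesis using stay by auto
  next
    case 2
    note S = next_state[OF ab 2 hs]
    have "v = fst (st a b r (k+1)) \<or> v = cur_pos h" using v unfolding S(1) by (auto split: if_splits)
    moreover have "Rup a b (h @ [(A, fst (st a b r (k+1)))])" unfolding Rup_def
      by (rule exI[of _ r], rule exI[of _ "k+1"]) (use S(2) 2 in auto)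
    ultimately show ?thesis using stay by auto
  next
    case 3
    have "v = cur_pos h" using v end_state[OF ab hs[unfolded 3], of A] by simp
    then show ?thesis using stay by simp
  qed
qed




definition V0 :: "real \<Rightarrow> nat \<Rightarrow> nat \<Rightarrow> int \<Rightarrow> real" where
  "V0 p a b e = 1 / (1 - (1 - p)^2) + (if 0 \<le> e then real_of_int e + real b else real a - real_of_int e - 1) / p"

definition Ud :: "real \<Rightarrow> nat \<Rightarrow> nat \<Rightarrow> int \<Rightarrow> int \<Rightarrow> int set \<Rightarrow> real" where
  "Ud p a b e x T = (if e \<in> T then 0 else if T = {} then V0 p a b e else real_of_int (dd a b e x T) / p)"

definition ufc :: "real \<Rightarrow> nat \<Rightarrow> nat \<Rightarrow> bool \<Rightarrow> int \<Rightarrow> int \<Rightarrow> real" where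
  "ufc p a b r e k = (if fc a b r e \<le> k then 0 else real_of_int (fc a b r e - k) / p)"

lemma Ud_st:
  assumes ab: "1 \<le> a" "1 \<le> b" and k: "1 \<le> k" "k \<le> 2 * (int a + int b)" and e: "e \<in> path_edges a b"
  shows "Ud p a b e (fst (st a b r k)) (snd (st a b r k)) = ufc p a b r e k"
proof (cases "e \<in> snd (st a b r k)")
  case True
  then show ?thesis using st_mem[OF ab _ k(2) e] k by (simp add: Ud_def ufc_def)
next
  case False
  then show ?thesis using st_mem[OF ab _ k(2) e] k st_nonempty[OF ab k, of r] st_dd[OF ab k e False]
    by (simp add: Ud_def ufc_def)
qed

lemma Ud_st0: "Ud p a b e (fst (st a b r 0)) (snd (st a b r 0)) = V0 p a b e"
  by (simp add: Ud_def st_0)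

definition Uup :: "real \<Rightarrow> nat \<Rightarrow> nat \<Rightarrow> int \<Rightarrow> history \<Rightarrow> ennreal" where
  "Uup p a b e h = ennreal (Ud p a b e (cur_pos h) (traversed_set a b h))"

definition cup :: "int \<Rightarrow> history \<Rightarrow> ennreal" where
  "cup e h = indicator {h. \<not> traversed_in e h} h"

lemma ufc_nonneg: "0 < p \<Longrightarrow> 0 \<le> ufc p a b r e k"
  by (simp add: ufc_def)

lemma upper_step:
  assumes p: "0 < p" "p \<le> 1" and ab: "1 \<le> a" "1 \<le> b" and e: "e \<in> path_edges a b" and R: "Rup a b h"
  shows "cup e h + step_int p a b (uniform_dfs a b) (Uup p a b e) h \<le> Uup p a b e h"
proof -
  obtain r k where k: "0 \<le> k" "k \<le> 2 * (int a + int b)" and hs: "(cur_pos h, traversed_set a b h) = st a b r k"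
    using R by (auto simp: Rup_def)
  have x: "cur_pos h = fst (st a b r k)" and T: "traversed_set a b h = snd (st a b r k)"
    using hs by (metis fst_conv, metis snd_conv)
  have stayU: "Uup p a b e (h @ [(A, cur_pos h)]) = Uup p a b e h" for A
    by (simp add: Uup_def TS_stay)
  consider "k = 0" | "1 \<le> k" "k < 2 * (int a + int b)" | "k = 2 * (int a + int b)" using k by linarith
  then show ?thesis
  proof cases
    case 3
    have eT: "e \<in> traversed_set a b h" using T st_end[OF ab, of r] e 3 by simp
    have U0: "Uup p a b e h = 0" using eT by (simp add: Uup_def Ud_def)
    have c0: "cup e h = 0" using eT e by (simp add: cup_def trav_iff)
    have "step_int p a b (uniform_dfs a b) (Uup p a b e) h = 0"
      unfolding step_int_def using end_state[OF ab hs[unfolded 3]] stayU U0 by simp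
    then show ?thesis using U0 c0 by simp
  next
    case 2
    note S = next_state[OF ab 2 hs]
    define g where "g = gE a b r k"
    have gE: "g \<in> path_edges a b" unfolding g_def using st_step(1)[OF ab 2] .
    have k1: "1 \<le> k + 1" "k + 1 \<le> 2 * (int a + int b)" using 2 by auto
    define u1 where "u1 = ufc p a b r e (k + 1)"
    define u0 where "u0 = ufc p a b r e k"
    have Uh: "Uup p a b e h = ennreal u0"
      unfolding Uup_def x T u0_def by (rule arg_cong[where f=ennreal], rule Ud_st[OF ab 2(1) k(2) e])
    have Un: "Uup p a b e (h @ [(A, fst (st a b r (k+1)))]) = ennreal u1" for A
      using S(2)[of A] Ud_st[OF ab k1 e, of p r] unfolding Uup_def u1_def
      by (metis fst_conv snd_conv)
    have "step_int p a b (uniform_dfs a b) (Uup p a b e) h =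
        (\<integral>\<^sup>+A. (\<lambda>u. if u then ennreal u1 else ennreal u0) (g \<in> A) \<partial>activation p a b)"
      unfolding step_int_def S(1) g_def[symmetric]
      by (intro nn_integral_cong) (simp add: Un stayU Uh)
    also have "\<dots> = ennreal u1 * ennreal p + ennreal u0 * ennreal (1 - p)"
      using p by (subst nn_act1[OF gE]) auto
    also have "\<dots> = ennreal (u1 * p + u0 * (1 - p))"
      using p by (intro enn_lin) (auto simp: u0_def u1_def ufc_nonneg)
    finally have I: "step_int p a b (uniform_dfs a b) (Uup p a b e) h = ennreal (u1 * p + u0 * (1 - p))" .
    have c: "cup e h = ennreal (if fc a b r e \<le> k then 0 else 1)"
      using st_mem[OF ab k e, of r] T e by (simp add: cup_def trav_iff)
    have "(if fc a b r e \<le> k then 0 else 1) + (u1 * p + u0 * (1 - p)) \<le> u0"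
    proof (cases "fc a b r e \<le> k")
      case True then show ?thesis by (simp add: u0_def u1_def ufc_def)
    next
      case False
      then have u0: "u0 = real_of_int (fc a b r e - k) / p" by (simp add: u0_def ufc_def)
      have u1: "u1 = real_of_int (fc a b r e - k - 1) / p"
        using False by (auto simp: u1_def ufc_def)
      show ?thesis using False p unfolding u0 u1 by (simp add: field_simps)
    qed
    then have le: "ennreal ((if fc a b r e \<le> k then 0 else 1) + (u1 * p + u0 * (1 - p))) \<le> ennreal u0"
      by (rule ennreal_leI)
    have s0: "0 \<le> u1 * p + u0 * (1 - p)" using p
      by (intro add_nonneg_nonneg mult_nonneg_nonneg) (auto simp: u0_def u1_def ufc_nonneg)
    have "ennreal ((if fc a b r e \<le> k then 0 else 1) + (u1 * p + u0 * (1 - p)))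
        = ennreal (if fc a b r e \<le> k then 0 else 1) + ennreal (u1 * p + u0 * (1 - p))"
      by (rule ennreal_plus) (auto intro: s0)
    with le have "ennreal (if fc a b r e \<le> k then 0 else 1) + ennreal (u1 * p + u0 * (1 - p)) \<le> ennreal u0"
      by simp
    then show ?thesis using I c Uh by simp
  next
    case 1
    note S = start_state[OF ab hs[unfolded 1]]
    define U1 where "U1 = ufc p a b True e 1"
    define U2 where "U2 = ufc p a b False e 1"
    define U0 where "U0 = V0 p a b e"
    define rr where "rr = 1 - (1 - p)^2"
    have rr: "0 < rr" unfolding rr_def using p by (rule r_pos)
    have U10: "0 \<le> U1" "0 \<le> U2" using p by (auto simp: U1_def U2_def ufc_nonneg)
    have one: "(1::int) \<le> 1" "1 \<le> 2 * (int a + int b)" using ab by auto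
    have U1e: "U1 = real_of_int (fc a b True e - 1) / p" and U2e: "U2 = real_of_int (fc a b False e - 1) / p"
      using fc_bounds[OF ab e, of True] fc_bounds[OF ab e, of False]
      by (auto simp: U1_def U2_def ufc_def)
    have M: "(U1 + U2) / 2 = U0 - 1 / rr"
      unfolding U1e U2e U0_def V0_def rr_def fc_def using p by (auto simp: field_simps)
    have U00: "0 \<le> U0" using M U10 rr by (simp add: divide_nonneg_pos) (smt (verit) divide_nonneg_pos)
    have Uh: "Uup p a b e h = ennreal U0"
      unfolding Uup_def x T U0_def 1 by (rule arg_cong[where f=ennreal], rule Ud_st0)
    have Un1: "Uup p a b e (h @ [(A, 1)]) = ennreal U1" for A
      using S(2)[of A] Ud_st[OF ab one e, of p True] unfolding Uup_def U1_def
      by (metis fst_conv snd_conv)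
    have Un2: "Uup p a b e (h @ [(A, -1)]) = ennreal U2" for A
      using S(3)[of A] Ud_st[OF ab one e, of p False] unfolding Uup_def U2_def
      by (metis fst_conv snd_conv)
    have Un0: "Uup p a b e (h @ [(A, 0)]) = ennreal U0" for A
      using stayU[of A] S(4) Uh by simp
    have pm: "(\<integral>\<^sup>+v. Uup p a b e (h @ [(A, v)]) \<partial>pmf_of_set {1, -1}) = ennreal ((U1 + U2) / 2)" for A
    proof -
      have "(\<integral>\<^sup>+v. Uup p a b e (h @ [(A, v)]) \<partial>pmf_of_set {1, -1}) = (ennreal U1 + ennreal U2) / 2"
        by (subst nn_integral_pmf_of_set) (auto simp: Un1 Un2)
      also have "\<dots> = ennreal (U1 + U2) / ennreal 2" using U10 by (simp add: ennreal_plus)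
      also have "\<dots> = ennreal ((U1 + U2) / 2)" using U10 by (intro divide_ennreal) auto
      finally show ?thesis .
    qed
    define G where "G u w = ennreal (if u \<and> w then (U1 + U2) / 2 else if u then U1 else if w then U2 else U0)" for u w
    have E0: "0 \<in> path_edges a b" "-1 \<in> path_edges a b" using ab by (auto simp: mem_E)
    have "step_int p a b (uniform_dfs a b) (Uup p a b e) h = (\<integral>\<^sup>+A. G (0 \<in> A) (-1 \<in> A) \<partial>activation p a b)"
      unfolding step_int_def S(1)
      by (intro nn_integral_cong) (simp add: G_def pm Un1 Un2 Un0)
    also have "\<dots> = (ennreal ((U1 + U2) / 2) * ennreal p + ennreal U1 * ennreal (1 - p)) * ennreal p
        + (ennreal U2 * ennreal p + ennreal U0 * ennreal (1 - p)) * ennreal (1 - p)"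
      using p by (subst nn_act2[OF E0]) (auto simp: G_def)
    also have "\<dots> = ennreal (((U1 + U2) / 2 * p + U1 * (1 - p)) * p + (U2 * p + U0 * (1 - p)) * (1 - p))"
    proof -
      have i1: "ennreal ((U1 + U2) / 2) * ennreal p + ennreal U1 * ennreal (1 - p) = ennreal ((U1 + U2) / 2 * p + U1 * (1 - p))"
        by (rule enn_lin) (use p U10 in auto)
      have i2: "ennreal U2 * ennreal p + ennreal U0 * ennreal (1 - p) = ennreal (U2 * p + U0 * (1 - p))"
        by (rule enn_lin) (use p U10 U00 in auto)
      have i3: "ennreal ((U1 + U2) / 2 * p + U1 * (1 - p)) * ennreal p + ennreal (U2 * p + U0 * (1 - p)) * ennreal (1 - p)
          = ennreal (((U1 + U2) / 2 * p + U1 * (1 - p)) * p + (U2 * p + U0 * (1 - p)) * (1 - p))"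
        by (rule enn_lin) (use p U10 U00 in \<open>auto intro!: add_nonneg_nonneg mult_nonneg_nonneg\<close>)
      show ?thesis unfolding i1 i2 i3 ..
    qed
    finally have I: "step_int p a b (uniform_dfs a b) (Uup p a b e) h =
        ennreal (((U1 + U2) / 2 * p + U1 * (1 - p)) * p + (U2 * p + U0 * (1 - p)) * (1 - p))" .
    have c: "cup e h = ennreal 1"
      using T e 1 by (simp add: cup_def trav_iff st_0)
    define Z where "Z = ((U1 + U2) / 2 * p + U1 * (1 - p)) * p + (U2 * p + U0 * (1 - p)) * (1 - p)"
    have Z0: "0 \<le> Z" unfolding Z_def using p U10 U00 by (auto intro!: add_nonneg_nonneg mult_nonneg_nonneg)
    have Zeq: "Z = (U1 + U2) / 2 * rr + U0 * (1 - rr)"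
      unfolding Z_def rr_def by (simp add: power2_eq_square algebra_simps)
    have "1 + Z = U0"
    proof -
      have "1 / rr * rr = 1" using rr by simp
      then show ?thesis unfolding Zeq M by (simp add: algebra_simps)
    qed
    then have "ennreal (1 + Z) = ennreal U0" by simp
    moreover have "ennreal (1 + Z) = ennreal 1 + ennreal Z" by (rule ennreal_plus) (auto intro: Z0)
    ultimately show ?thesis using I c Uh unfolding Z_def by simp
  qed
qed




lemma ST_dfs_bound:
  assumes p: "0 < p" "p \<le> 1" and ab: "1 \<le> a" "1 \<le> b" and e: "e \<in> path_edges a b"
  shows "search_time p a b (uniform_dfs a b) e \<le> ennreal (real (a + b) / p + 1 / (1 - (1 - p)^2) - 1 / p)"
proof -
  have R0: "Rup a b []" unfolding Rup_def
    by (rule exI[of _ True], rule exI[of _ 0]) (auto simp: st_0 traversed_set_def)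
  have reach: "\<And>t h. h \<in> set_pmf (run p a b (uniform_dfs a b) t) \<Longrightarrow> Rup a b h"
    by (rule run_reach[of "Rup a b"]) (auto intro: R0 Rup_step[OF ab])
  have "search_time p a b (uniform_dfs a b) e = (\<Sum>t. \<integral>\<^sup>+h. cup e h \<partial>run p a b (uniform_dfs a b) t)"
    by (simp add: ST_int cup_def)
  also have "\<dots> \<le> Uup p a b e []"
    by (rule upper_potential[where R="Rup a b"]) (auto intro: reach upper_step[OF p ab e])
  also have "Uup p a b e [] = ennreal (V0 p a b e)"
    by (simp add: Uup_def Ud_def traversed_set_def)
  also have "\<dots> \<le> ennreal (real (a + b) / p + 1 / (1 - (1 - p)^2) - 1 / p)"
  proof (rule ennreal_leI)
    have "(if 0 \<le> e then real_of_int e + real b else real a - real_of_int e - 1) \<le> real (a + b) - 1"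
      using e unfolding mem_E by auto
    then have "(if 0 \<le> e then real_of_int e + real b else real a - real_of_int e - 1) / p \<le> (real (a + b) - 1) / p"
      using p by (intro divide_right_mono) auto
    then show "V0 p a b e \<le> real (a + b) / p + 1 / (1 - (1 - p)^2) - 1 / p"
      unfolding V0_def by (simp add: diff_divide_distrib)
  qed
  finally show ?thesis .
qed

theorem mainTheorem12:
  fixes p :: real and a b :: nat
  assumes "0 < p" and "p \<le> 1" and "1 \<le> a" and "1 \<le> b"
  defines "v \<equiv> ennreal (real (a + b) / p + 1 / (1 - (1 - p)^2) - 1 / p)"
  shows "game_value p a b v
       \<and> hider_optimal p a b v (extreme_hider a b)
       \<and> searcher_optimal p a b v (uniform_dfs a b)"
proof -
  note p = assms(1,2) and ab = assms(3,4)
  have hid: "extreme_hider a b \<in> hider_strategies a b"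
    using extreme_set[OF ab] by (simp add: hider_strategies_def)
  have hb: "v \<le> payoff p a b (extreme_hider a b) \<sigma>" if "valid_strategy a b \<sigma>" for \<sigma>
    unfolding v_def by (rule hider_bound[OF p ab that])
  have sb: "payoff p a b \<eta> (uniform_dfs a b) \<le> v" if "\<eta> \<in> hider_strategies a b" for \<eta>
  proof -
    have sub: "set_pmf \<eta> \<subseteq> path_edges a b" using that by (simp add: hider_strategies_def)
    have "payoff p a b \<eta> (uniform_dfs a b) = (\<integral>\<^sup>+e. search_time p a b (uniform_dfs a b) e \<partial>\<eta>)"
      by (rule payoff_int[OF sub])
    also have "\<dots> \<le> (\<integral>\<^sup>+e. v \<partial>\<eta>)"
      unfolding v_def using sub by (intro nn_integral_mono_AE AE_pmfI ST_dfs_bound[OF p ab]) auto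
    also have "\<dots> = v" by (simp add: measure_pmf.emeasure_space_1)
    finally show ?thesis .
  qed
  have val: "valid_strategy a b (uniform_dfs a b)" by (rule dfs_valid)
  have lv: "lower_value p a b = v"
    unfolding lower_value_def
  proof (rule antisym)
    show "(SUP \<eta> \<in> hider_strategies a b. INF \<sigma> \<in> Collect (valid_strategy a b). payoff p a b \<eta> \<sigma>) \<le> v"
    proof (rule SUP_least)
      fix \<eta> assume "\<eta> \<in> hider_strategies a b"
      then have "payoff p a b \<eta> (uniform_dfs a b) \<le> v" by (rule sb)
      then show "(INF \<sigma> \<in> Collect (valid_strategy a b). payoff p a b \<eta> \<sigma>) \<le> v"
        using val by (meson INF_lower mem_Collect_eq order_trans)
    qed
    have "v \<le> (INF \<sigma> \<in> Collect (valid_strategy a b). payoff p a b (extreme_hider a b) \<sigma>)"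
      by (rule INF_greatest) (auto intro: hb)
    also have "\<dots> \<le> (SUP \<eta> \<in> hider_strategies a b. INF \<sigma> \<in> Collect (valid_strategy a b). payoff p a b \<eta> \<sigma>)"
      using hid by (rule SUP_upper)
    finally show "v \<le> (SUP \<eta> \<in> hider_strategies a b. INF \<sigma> \<in> Collect (valid_strategy a b). payoff p a b \<eta> \<sigma>)" .
  qed
  have uv: "upper_value p a b = v"
    unfolding upper_value_def
  proof (rule antisym)
    have "(INF \<sigma> \<in> Collect (valid_strategy a b). SUP \<eta> \<in> hider_strategies a b. payoff p a b \<eta> \<sigma>)
        \<le> (SUP \<eta> \<in> hider_strategies a b. payoff p a b \<eta> (uniform_dfs a b))"
      using val by (intro INF_lower) simp
    also have "\<dots> \<le> v" by (rule SUP_least) (rule sb)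
    finally show "(INF \<sigma> \<in> Collect (valid_strategy a b). SUP \<eta> \<in> hider_strategies a b. payoff p a b \<eta> \<sigma>) \<le> v" .
    show "v \<le> (INF \<sigma> \<in> Collect (valid_strategy a b). SUP \<eta> \<in> hider_strategies a b. payoff p a b \<eta> \<sigma>)"
    proof (rule INF_greatest)
      fix \<sigma> assume "\<sigma> \<in> Collect (valid_strategy a b)"
      then have "v \<le> payoff p a b (extreme_hider a b) \<sigma>" by (intro hb) simp
      also have "\<dots> \<le> (SUP \<eta> \<in> hider_strategies a b. payoff p a b \<eta> \<sigma>)"
        using hid by (rule SUP_upper)
      finally show "v \<le> (SUP \<eta> \<in> hider_strategies a b. payoff p a b \<eta> \<sigma>)" .
    qed
  qed
  show ?thesis
    unfolding game_value_def hider_optimal_def searcher_optimal_def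
    using lv uv hid hb val sb by blast
qed


end
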